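(* Given $\alpha>0$, there exist $\Lambda_0,C>0$ such that for every $\Lambda\ge\Lambda_0$ and every $h_1,h_2\in C(\overline{I_\Lambda})$, where $I_\Lambda=\big(-(\ln\Lambda)\Lambda^{-1/4},(\ln\Lambda)\Lambda^{-1/4}\big)$, the boundary value problem \[ \begin{cases} -\varphi_1''+\Lambda^{1/2}V_2^2(\Lambda^{1/4}z)\varphi_1+2\Lambda^{1/2}V_1(\Lambda^{1/4}z)V_2(\Lambda^{1/4}z)\varphi_2=h_1,\\ -\varphi_2''+\Lambda^{1/2}V_1^2(\Lambda^{1/4}z)\varphi_2+2\Lambda^{1/2}V_1(\Lambda^{1/4}z)V_2(\Lambda^{1/4}z)\varphi_1=h_2, \end{cases}\quad z\in I_\Lambda, \] \[ \varphi_i\big(\pm(\ln\Lambda)\Lambda^{-1/4}\big)=0,\ i=1,2, \] has a unique solution, and it satisfies \[ \sum_{i=1}^2\Big(\Lambda^{-1/4}\|\varphi_i'\|_{L^\infty(I_\Lambda)}+\|\varphi_i\|_{L^\infty(I_\Lambda)}\Big)\le C\Lambda^{-\frac12+\alpha}\sum_{i=1}^2\|h_i\|_{L^\infty(I_\Lambda)}. \]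
   Context: $(V_1,V_2)$ is the unique solution with positive components of $V_1''=V_2^2V_1$, $V_2''=V_1^2V_2$ on $\mathbb{R}$ such that $V_1(x)/x\to1/\sqrt2$, $V_2(x)\to0$ as $x\to+\infty$, and $V_1(-x)=V_2(x)$. *)

theory Defs
  imports "HOL-Analysis.Analysis"
begin

definition is_V_pair :: "(real \<Rightarrow> real) \<Rightarrow> (real \<Rightarrow> real) \<Rightarrow> bool" where
  "is_V_pair V1 V2 \<longleftrightarrow>
     (\<forall>x. V1 x > 0 \<and> V2 x > 0) \<and>
     (\<forall>x. V1 differentiable at x \<and> deriv V1 differentiable at x \<and>
          V2 differentiable at x \<and> deriv V2 differentiable at x) \<and>
     (\<forall>x. deriv (deriv V1) x = (V2 x)\<^sup>2 * V1 x \<and> deriv (deriv V2) x = (V1 x)\<^sup>2 * V2 x) \<and>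
     ((\<lambda>x. V1 x / x) \<longlongrightarrow> 1 / sqrt 2) at_top \<and>
     (V2 \<longlongrightarrow> 0) at_top \<and>
     (\<forall>x. V1 (-x) = V2 x)"

definition halfwidth :: "real \<Rightarrow> real" where
  "halfwidth Lam = ln Lam * Lam powr (-1/4)"

text \<open>L^infinity norm (= sup norm for the continuous functions considered), valued in ereal.\<close>
definition supn :: "real set \<Rightarrow> (real \<Rightarrow> real) \<Rightarrow> ereal" where
  "supn S f = (SUP z\<in>S. ereal \<bar>f z\<bar>)"

definition bvp_sol :: "(real \<Rightarrow> real) \<Rightarrow> (real \<Rightarrow> real) \<Rightarrow> real \<Rightarrow> (real \<Rightarrow> real) \<Rightarrow> (real \<Rightarrow> real)
    \<Rightarrow> (real \<Rightarrow> real) \<Rightarrow> (real \<Rightarrow> real) \<Rightarrow> bool" where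
  "bvp_sol V1 V2 Lam h1 h2 p1 p2 \<longleftrightarrow>
     (let L = halfwidth Lam; s = Lam powr (1/4) in
       continuous_on {-L..L} p1 \<and> continuous_on {-L..L} p2 \<and>
       (\<forall>z\<in>{-L<..<L}. p1 differentiable at z \<and> deriv p1 differentiable at z \<and>
                       p2 differentiable at z \<and> deriv p2 differentiable at z) \<and>
       (\<forall>z\<in>{-L<..<L}.
          - deriv (deriv p1) z + sqrt Lam * (V2 (s * z))\<^sup>2 * p1 z
            + 2 * sqrt Lam * V1 (s * z) * V2 (s * z) * p2 z = h1 z \<and>
          - deriv (deriv p2) z + sqrt Lam * (V1 (s * z))\<^sup>2 * p2 z
            + 2 * sqrt Lam * V1 (s * z) * V2 (s * z) * p1 z = h2 z) \<and>
       p1 (-L) = 0 \<and> p1 L = 0 \<and> p2 (-L) = 0 \<and> p2 L = 0)"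

end

theory Submission
  imports Defs "HOL-Analysis.Analysis" "HOL-Real_Asymp.Real_Asymp"
begin


lemma cont_bounded_interval:
  fixes f :: "real \<Rightarrow> 'a::real_normed_vector"
  assumes "continuous_on {a..b} f"
  shows "\<exists>B. \<forall>x\<in>{a..b}. norm (f x) \<le> B"
proof -
  have "compact (f ` {a..b})" using assms by (intro compact_continuous_image) auto
  hence "bounded (f ` {a..b})" by (rule compact_imp_bounded)
  thus ?thesis unfolding bounded_iff by blast
qed

lemma exp_integral_aux:
  fixes k a y :: real
  assumes "k > 0" "a \<le> y"
  shows "((\<lambda>t. exp (k * (t - a))) has_integral (exp (k * (y - a)) - 1) / k) {a..y}"
proof -
  have "((\<lambda>t. exp (k * (t - a))) has_integral (exp (k * (y - a)) / k - exp (k * (a - a)) / k)) {a..y}"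
  proof (rule fundamental_theorem_of_calculus)
    show "a \<le> y" by fact
    fix x assume "x \<in> {a..y}"
    show "((\<lambda>t. exp (k * (t - a)) / k) has_vector_derivative exp (k * (x - a))) (at x within {a..y})"
      unfolding has_real_derivative_iff_has_vector_derivative[symmetric]
    proof (rule has_field_derivative_at_within)
    have "((\<lambda>t. exp (k * (t - a)) / k) has_real_derivative (exp (k * (x - a)) * (k * 1)) / k) (at x)"
      using assms by (intro derivative_eq_intros) auto
    moreover have "k \<noteq> 0" using assms by simp
    ultimately show "((\<lambda>t. exp (k * (t - a)) / k) has_real_derivative exp (k * (x - a))) (at x)"
      by simp
    qed
  qed
  thus ?thesis by (simp add: diff_divide_distrib)
qed

lemma ivp_exists:
  fixes F :: "real \<Rightarrow> 'a::banach \<Rightarrow> 'a" and U0 :: 'a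
  assumes ab: "a \<le> b"
    and contF: "continuous_on ({a..b} \<times> UNIV) (\<lambda>p. F (fst p) (snd p))"
    and lip: "\<And>t U W. t \<in> {a..b} \<Longrightarrow> norm (F t U - F t W) \<le> c * norm (U - W)"
    and c: "c \<ge> 0"
  shows "\<exists>U. continuous_on {a..b} U \<and> (\<forall>x\<in>{a..b}. U x = U0 + integral {a..x} (\<lambda>t. F t (U t)))"
proof -
  define k where "k = 2 * c + 1"
  have kpos: "k > 0" using c unfolding k_def by simp
  define cl where "cl x = max a (min b x)" for x
  have cl_in: "cl x \<in> {a..b}" for x using ab unfolding cl_def by auto
  have cl_id: "x \<in> {a..b} \<Longrightarrow> cl x = x" for x unfolding cl_def by auto
  have cl_cont: "continuous_on UNIV cl" unfolding cl_def by (intro continuous_intros)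
  define E where "E t = exp (k * (t - a))" for t
  define G where "G V t = F t (E t *\<^sub>R apply_bcontfun V t)" for V :: "real \<Rightarrow>\<^sub>C 'a" and t
  have Gcont: "continuous_on {a..b} (G V)" for V
  proof -
    have "continuous_on {a..b} (\<lambda>t. (t, E t *\<^sub>R apply_bcontfun V t))"
      unfolding E_def by (intro continuous_intros) auto
    moreover have "(\<lambda>t. (t, E t *\<^sub>R apply_bcontfun V t)) ` {a..b} \<subseteq> {a..b} \<times> UNIV" by auto
    ultimately have "continuous_on {a..b} (\<lambda>t. (\<lambda>p. F (fst p) (snd p)) (t, E t *\<^sub>R apply_bcontfun V t))"
      by (rule continuous_on_compose2[OF contF])
    thus ?thesis unfolding G_def by simp
  qed
  have Gint: "G V integrable_on {a..y}" if "y \<in> {a..b}" for V y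
    by (rule integrable_subinterval_real[OF integrable_continuous_real[OF Gcont[of V]]]) (use that in auto)
  define psi where "psi V y = exp (- k * (y - a)) *\<^sub>R (U0 + integral {a..y} (G V))" for V y
  have psicont: "continuous_on {a..b} (psi V)" for V
    unfolding psi_def
    by (intro continuous_intros indefinite_integral_continuous_1 integrable_continuous_real Gcont)
  have psib: "(\<lambda>x. psi V (cl x)) \<in> bcontfun" for V
  proof -
    have "range cl \<subseteq> {a..b}" using cl_in by auto
    hence c1: "continuous_on UNIV (\<lambda>x. psi V (cl x))"
      by (rule continuous_on_compose2[OF psicont cl_cont])
    obtain B where B: "\<forall>y\<in>{a..b}. norm (psi V y) \<le> B" using cont_bounded_interval[OF psicont] by blast
    show ?thesis using c1 B cl_in by (intro bcontfun_normI) auto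
  qed
  define Phi where "Phi V = Bcontfun (\<lambda>x. psi V (cl x))" for V
  have Phi_app: "apply_bcontfun (Phi V) x = psi V (cl x)" for V x
    unfolding Phi_def using psib[of V] by (simp add: Bcontfun_inverse)
  have contr: "dist (Phi V) (Phi W) \<le> (1/2) * dist V W" for V W
  proof (rule dist_bound)
    fix x
    define y where "y = cl x"
    have y: "y \<in> {a..b}" unfolding y_def by (rule cl_in)
    define D where "D = dist V W"
    have Dnn: "D \<ge> 0" unfolding D_def by simp
    have pt: "norm (G V t - G W t) \<le> c * D * E t" if "t \<in> {a..b}" for t
    proof -
      have "norm (G V t - G W t) \<le> c * norm (E t *\<^sub>R apply_bcontfun V t - E t *\<^sub>R apply_bcontfun W t)"
        unfolding G_def using lip that by blast
      also have "\<dots> = c * (E t * norm (apply_bcontfun V t - apply_bcontfun W t))"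
        unfolding E_def by (simp add: scaleR_diff_right[symmetric])
      also have "\<dots> \<le> c * (E t * D)"
        using dist_bounded[of V t W] c unfolding D_def E_def
        by (intro mult_left_mono) (auto simp: dist_norm)
      finally show ?thesis by (simp add: algebra_simps)
    qed
    have intE: "((\<lambda>t. c * D * E t) has_integral c * D * ((E y - 1) / k)) {a..y}"
      unfolding E_def using exp_integral_aux[OF kpos, of a y] y by (intro has_integral_mult_right) auto
    have "norm (integral {a..y} (G V) - integral {a..y} (G W)) = norm (integral {a..y} (\<lambda>t. G V t - G W t))"
      using Gint[OF y, of V] Gint[OF y, of W] by (simp add: integral_diff)
    also have "\<dots> \<le> integral {a..y} (\<lambda>t. c * D * E t)"
      using Gint[OF y, of V] Gint[OF y, of W] intE pt y
      by (intro integral_norm_bound_integral) (auto intro: integrable_diff)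
    also have "\<dots> = c * D * ((E y - 1) / k)" using intE by (rule integral_unique)
    finally have I: "norm (integral {a..y} (G V) - integral {a..y} (G W)) \<le> c * D * ((E y - 1) / k)" .
    have "dist (apply_bcontfun (Phi V) x) (apply_bcontfun (Phi W) x)
        = exp (- k * (y - a)) * norm (integral {a..y} (G V) - integral {a..y} (G W))"
      unfolding Phi_app psi_def y_def[symmetric] dist_norm
      by (simp add: scaleR_diff_right[symmetric])
    also have "\<dots> \<le> exp (- k * (y - a)) * (c * D * ((E y - 1) / k))"
      using I by (intro mult_left_mono) auto
    also have "\<dots> = c * D * ((1 - exp (- k * (y - a))) / k)"
    proof -
      have "exp (- k * (y - a)) * E y = 1" unfolding E_def by (simp add: exp_add[symmetric])
      thus ?thesis by (simp add: field_simps)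
    qed
    also have "\<dots> \<le> c * D * (1 / k)"
      using kpos c Dnn by (intro mult_left_mono divide_right_mono) auto
    also have "\<dots> \<le> (1/2) * D"
    proof -
      have "c * (1 / k) \<le> 1/2" using c kpos unfolding k_def by (simp add: field_simps)
      thus ?thesis using Dnn by (metis mult.commute mult.left_commute mult_right_mono)
    qed
    finally show "dist (apply_bcontfun (Phi V) x) (apply_bcontfun (Phi W) x) \<le> (1/2) * dist V W"
      unfolding D_def .
  qed
  obtain V where V: "Phi V = V" using banach_fix_type[of "1/2" Phi] contr by auto
  define U where "U x = E x *\<^sub>R apply_bcontfun V x" for x
  have Ucont: "continuous_on {a..b} U" unfolding U_def E_def by (intro continuous_intros) auto
  have "U x = U0 + integral {a..x} (\<lambda>t. F t (U t))" if x: "x \<in> {a..b}" for x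
  proof -
    have "apply_bcontfun V x = psi V x" using Phi_app[of V x] cl_id[OF x] V by simp
    hence "U x = E x *\<^sub>R psi V x" unfolding U_def by simp
    also have "\<dots> = U0 + integral {a..x} (G V)"
      unfolding psi_def E_def by (simp add: exp_add[symmetric])
    also have "G V = (\<lambda>t. F t (U t))" unfolding G_def U_def by auto
    finally show ?thesis .
  qed
  thus ?thesis using Ucont by blast
qed


definition odesol :: "real \<Rightarrow> real \<Rightarrow> (real \<Rightarrow> real) \<Rightarrow> (real \<Rightarrow> real) \<Rightarrow> (real \<Rightarrow> real)
   \<Rightarrow> (real \<Rightarrow> real) \<Rightarrow> (real \<Rightarrow> real) \<Rightarrow> (real \<Rightarrow> real) \<Rightarrow> (real \<Rightarrow> real)
   \<Rightarrow> (real \<Rightarrow> real) \<Rightarrow> (real \<Rightarrow> real) \<Rightarrow> bool" where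
  "odesol a b P K R f1 f2 u1 u2 u1' u2' \<longleftrightarrow>
     continuous_on {a..b} u1 \<and> continuous_on {a..b} u2 \<and>
     (\<forall>x\<in>{a<..<b}. (u1 has_real_derivative u1' x) (at x) \<and> (u2 has_real_derivative u2' x) (at x) \<and>
        (u1' has_real_derivative (P x * u1 x - K x * u2 x - f1 x)) (at x) \<and>
        (u2' has_real_derivative (R x * u2 x - K x * u1 x - f2 x)) (at x))"

lemma vd_fst: "(U has_vector_derivative D) F \<Longrightarrow> ((\<lambda>x. fst (U x)) has_vector_derivative fst D) F"
  using has_derivative_fst[of U "\<lambda>h. h *\<^sub>R D" F] by (simp add: has_vector_derivative_def)

lemma vd_snd: "(U has_vector_derivative D) F \<Longrightarrow> ((\<lambda>x. snd (U x)) has_vector_derivative snd D) F"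
  using has_derivative_snd[of U "\<lambda>h. h *\<^sub>R D" F] by (simp add: has_vector_derivative_def)

lemma ivp_deriv:
  fixes F :: "real \<Rightarrow> 'a::banach \<Rightarrow> 'a"
  assumes Ucont: "continuous_on {a..b} U"
    and Ueq: "\<forall>x\<in>{a..b}. U x = U0 + integral {a..x} (\<lambda>t. F t (U t))"
    and contF: "continuous_on ({a..b} \<times> UNIV) (\<lambda>p. F (fst p) (snd p))"
    and x: "x \<in> {a<..<b}"
  shows "(U has_vector_derivative F x (U x)) (at x)"
proof -
  have "continuous_on {a..b} (\<lambda>t. (t, U t))" using Ucont by (intro continuous_intros)
  moreover have "(\<lambda>t. (t, U t)) ` {a..b} \<subseteq> {a..b} \<times> UNIV" by auto
  ultimately have "continuous_on {a..b} (\<lambda>t. (\<lambda>p. F (fst p) (snd p)) (t, U t))"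
    by (rule continuous_on_compose2[OF contF])
  hence Gc: "continuous_on {a..b} (\<lambda>t. F t (U t))" by simp
  have xi: "x \<in> {a..b}" using x by auto
  have "((\<lambda>y. integral {a..y} (\<lambda>t. F t (U t))) has_vector_derivative F x (U x)) (at x within {a..b})"
    using integral_has_vector_derivative[OF Gc xi] .
  moreover have "at x within {a..b} = at x" using x by (intro at_within_interior) simp
  ultimately have "((\<lambda>y. integral {a..y} (\<lambda>t. F t (U t))) has_vector_derivative F x (U x)) (at x)" by simp
  hence "((\<lambda>y. U0 + integral {a..y} (\<lambda>t. F t (U t))) has_vector_derivative F x (U x)) (at x)"
    by (auto intro!: derivative_eq_intros)
  thus ?thesis
    by (rule has_vector_derivative_transform_within_open[of _ _ _ "{a<..<b}"]) (use x Ueq in auto)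
qed

lemma cont_fst_comp:
  assumes "continuous_on S P"
  shows "continuous_on (S \<times> T) (\<lambda>p. P (fst p))"
  by (rule continuous_on_compose2[OF assms]) (auto intro: continuous_intros)

lemma sys_ivp:
  assumes ab: "a < b"
    and cP: "continuous_on {a..b} P" and cK: "continuous_on {a..b} K" and cR: "continuous_on {a..b} R"
    and cf1: "continuous_on {a..b} f1" and cf2: "continuous_on {a..b} f2"
  shows "\<exists>u1 u2 v1 v2. odesol a b P K R f1 f2 u1 u2 v1 v2 \<and> u1 a = 0 \<and> u2 a = 0 \<and>
            continuous_on {a..b} v1 \<and> continuous_on {a..b} v2 \<and> v1 a = d1 \<and> v2 a = d2"
proof -
  define F where "F t U = (fst (snd (snd U)), snd (snd (snd U)),
       P t * fst U - K t * fst (snd U) - f1 t, R t * fst (snd U) - K t * fst U - f2 t)"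
    for t and U :: "real \<times> real \<times> real \<times> real"
  have contF: "continuous_on ({a..b} \<times> UNIV) (\<lambda>p. F (fst p) (snd p))"
    unfolding F_def
    by (intro continuous_intros cont_fst_comp cP cK cR cf1 cf2)
  have "continuous_on {a..b} (\<lambda>t. (P t, K t, R t))" using cP cK cR by (intro continuous_intros)
  then obtain Mx where Mx: "\<forall>t\<in>{a..b}. norm (P t, K t, R t) \<le> Mx"
    using cont_bounded_interval[of a b "\<lambda>t. (P t, K t, R t)"] by blast
  have Mx': "\<bar>P t\<bar> \<le> Mx" "\<bar>K t\<bar> \<le> Mx" "\<bar>R t\<bar> \<le> Mx" if "t \<in> {a..b}" for t
  proof -
    have n: "norm (P t, K t, R t) \<le> Mx" using Mx that by blast
    have "norm (K t, R t) \<le> Mx" using n norm_snd_le[of "(K t, R t)" "P t"] by linarith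
    thus "\<bar>K t\<bar> \<le> Mx" "\<bar>R t\<bar> \<le> Mx" using norm_fst_le[of "K t" "R t"] norm_snd_le[of "R t" "K t"] by auto
    show "\<bar>P t\<bar> \<le> Mx" using n norm_fst_le[of "P t" "(K t, R t)"] by auto
  qed
  have Mx0: "Mx \<ge> 0" using Mx'(1)[of a] ab by auto
  define c where "c = 4 * (1 + 2 * Mx)"
  have lip: "norm (F t U - F t W) \<le> c * norm (U - W)" if t: "t \<in> {a..b}" for t U W
  proof -
    obtain d1 d2 e1 e2 where D: "U - W = (d1, d2, e1, e2)" by (metis prod.collapse)
    have nD: "\<bar>d1\<bar> \<le> norm (U - W)" "\<bar>d2\<bar> \<le> norm (U - W)" "\<bar>e1\<bar> \<le> norm (U - W)" "\<bar>e2\<bar> \<le> norm (U - W)"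
      unfolding D using norm_fst_le[of d1 "(d2,e1,e2)"] norm_snd_le[of "(d2,e1,e2)" d1]
        norm_fst_le[of d2 "(e1,e2)"] norm_snd_le[of "(e1,e2)" d2] norm_fst_le[of e1 e2] norm_snd_le[of e2 e1]
      by (auto intro: order_trans)
    have "F t U - F t W = (e1, e2, P t * d1 - K t * d2, R t * d2 - K t * d1)"
      using D unfolding F_def by (cases U, cases W) (auto simp: algebra_simps)
    hence "norm (F t U - F t W) \<le> \<bar>e1\<bar> + \<bar>e2\<bar> + \<bar>P t * d1 - K t * d2\<bar> + \<bar>R t * d2 - K t * d1\<bar>"
      using norm_Pair_le[of e1 "(e2, P t * d1 - K t * d2, R t * d2 - K t * d1)"]
        norm_Pair_le[of e2 "(P t * d1 - K t * d2, R t * d2 - K t * d1)"]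
        norm_Pair_le[of "P t * d1 - K t * d2" "R t * d2 - K t * d1"] by simp
    also have "\<dots> \<le> \<bar>e1\<bar> + \<bar>e2\<bar> + (Mx * \<bar>d1\<bar> + Mx * \<bar>d2\<bar>) + (Mx * \<bar>d2\<bar> + Mx * \<bar>d1\<bar>)"
    proof -
      have "\<bar>P t * d1\<bar> \<le> Mx * \<bar>d1\<bar>" "\<bar>K t * d2\<bar> \<le> Mx * \<bar>d2\<bar>" "\<bar>R t * d2\<bar> \<le> Mx * \<bar>d2\<bar>" "\<bar>K t * d1\<bar> \<le> Mx * \<bar>d1\<bar>"
        using Mx'[OF t] by (auto simp: abs_mult intro: mult_right_mono)
      thus ?thesis by linarith
    qed
    also have "\<dots> \<le> c * norm (U - W)"
    proof -
      have "Mx * \<bar>d1\<bar> \<le> Mx * norm (U - W)" "Mx * \<bar>d2\<bar> \<le> Mx * norm (U - W)"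
        using nD Mx0 by (auto intro: mult_left_mono)
      moreover have "0 \<le> Mx * norm (U - W)" using Mx0 by simp
      ultimately show ?thesis using nD unfolding c_def by (simp add: algebra_simps, linarith)
    qed
    finally show ?thesis .
  qed
  have c0: "c \<ge> 0" unfolding c_def using Mx0 by simp
  obtain U where Uc: "continuous_on {a..b} U"
    and Ueq: "\<forall>x\<in>{a..b}. U x = (0, 0, d1, d2) + integral {a..x} (\<lambda>t. F t (U t))"
    using ivp_exists[of a b F c "(0,0,d1,d2)"] ab contF lip c0 by auto
  have Ua: "U a = (0, 0, d1, d2)" using Ueq ab by auto
  define u1 where "u1 x = fst (U x)" for x
  define u2 where "u2 x = fst (snd (U x))" for x
  define v1 where "v1 x = fst (snd (snd (U x)))" for x
  define v2 where "v2 x = snd (snd (snd (U x)))" for x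
  have cont: "continuous_on {a..b} u1" "continuous_on {a..b} u2" "continuous_on {a..b} v1" "continuous_on {a..b} v2"
    unfolding u1_def u2_def v1_def v2_def using Uc by (auto intro!: continuous_intros)
  have der: "(u1 has_real_derivative v1 x) (at x) \<and> (u2 has_real_derivative v2 x) (at x) \<and>
        (v1 has_real_derivative (P x * u1 x - K x * u2 x - f1 x)) (at x) \<and>
        (v2 has_real_derivative (R x * u2 x - K x * u1 x - f2 x)) (at x)" if x: "x \<in> {a<..<b}" for x
  proof -
    have D: "(U has_vector_derivative F x (U x)) (at x)" using ivp_deriv[OF Uc Ueq contF x] .
    have D1: "((\<lambda>x. fst (U x)) has_vector_derivative fst (F x (U x))) (at x)" using vd_fst[OF D] .
    have D2: "((\<lambda>x. snd (U x)) has_vector_derivative snd (F x (U x))) (at x)" using vd_snd[OF D] .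
    have D3: "((\<lambda>x. fst (snd (U x))) has_vector_derivative fst (snd (F x (U x)))) (at x)" using vd_fst[OF D2] .
    have D4: "((\<lambda>x. snd (snd (U x))) has_vector_derivative snd (snd (F x (U x)))) (at x)" using vd_snd[OF D2] .
    have D5: "((\<lambda>x. fst (snd (snd (U x)))) has_vector_derivative fst (snd (snd (F x (U x))))) (at x)" using vd_fst[OF D4] .
    have D6: "((\<lambda>x. snd (snd (snd (U x)))) has_vector_derivative snd (snd (snd (F x (U x))))) (at x)" using vd_snd[OF D4] .
    show ?thesis using D1 D3 D5 D6
      unfolding u1_def u2_def v1_def v2_def F_def has_real_derivative_iff_has_vector_derivative
      by simp
  qed
  show ?thesis
    apply (rule exI[of _ u1], rule exI[of _ u2], rule exI[of _ v1], rule exI[of _ v2])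
    using cont der Ua unfolding odesol_def u1_def u2_def v1_def v2_def by auto
qed

lemma odesol_lin:
  assumes "odesol a b P K R f1 f2 u1 u2 v1 v2" "odesol a b P K R (\<lambda>x. 0) (\<lambda>x. 0) w1 w2 z1 z2"
  shows "odesol a b P K R f1 f2 (\<lambda>x. u1 x + c * w1 x) (\<lambda>x. u2 x + c * w2 x)
            (\<lambda>x. v1 x + c * z1 x) (\<lambda>x. v2 x + c * z2 x)"
  unfolding odesol_def
proof (intro conjI ballI)
  show "continuous_on {a..b} (\<lambda>x. u1 x + c * w1 x)" "continuous_on {a..b} (\<lambda>x. u2 x + c * w2 x)"
    using assms unfolding odesol_def by (auto intro!: continuous_intros)
  fix x assume x: "x \<in> {a<..<b}"
  have A: "(u1 has_real_derivative v1 x) (at x)" "(u2 has_real_derivative v2 x) (at x)"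
        "(v1 has_real_derivative (P x * u1 x - K x * u2 x - f1 x)) (at x)"
        "(v2 has_real_derivative (R x * u2 x - K x * u1 x - f2 x)) (at x)"
    using assms(1) x unfolding odesol_def by auto
  have B: "(w1 has_real_derivative z1 x) (at x)" "(w2 has_real_derivative z2 x) (at x)"
        "(z1 has_real_derivative (P x * w1 x - K x * w2 x - 0)) (at x)"
        "(z2 has_real_derivative (R x * w2 x - K x * w1 x - 0)) (at x)"
    using assms(2) x unfolding odesol_def by auto
  show "((\<lambda>x. u1 x + c * w1 x) has_real_derivative v1 x + c * z1 x) (at x)"
    using A(1) B(1) by (auto intro!: derivative_eq_intros)
  show "((\<lambda>x. u2 x + c * w2 x) has_real_derivative v2 x + c * z2 x) (at x)"
    using A(2) B(2) by (auto intro!: derivative_eq_intros)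
  have "((\<lambda>x. v1 x + c * z1 x) has_real_derivative (P x * u1 x - K x * u2 x - f1 x) + c * (P x * w1 x - K x * w2 x - 0)) (at x)"
    using A(3) B(3) by (auto intro!: derivative_eq_intros)
  thus "((\<lambda>x. v1 x + c * z1 x) has_real_derivative P x * (u1 x + c * w1 x) - K x * (u2 x + c * w2 x) - f1 x) (at x)"
    by (simp add: algebra_simps)
  have "((\<lambda>x. v2 x + c * z2 x) has_real_derivative (R x * u2 x - K x * u1 x - f2 x) + c * (R x * w2 x - K x * w1 x - 0)) (at x)"
    using A(4) B(4) by (auto intro!: derivative_eq_intros)
  thus "((\<lambda>x. v2 x + c * z2 x) has_real_derivative R x * (u2 x + c * w2 x) - K x * (u1 x + c * w1 x) - f2 x) (at x)"
    by (simp add: algebra_simps)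
qed


lemma ext_cont:
  fixes th w :: "real \<Rightarrow> real"
  assumes ab: "a < b" and wc: "continuous_on {a..b} w" and wa: "w a = 0" and wb: "w b = 0"
    and bd: "\<forall>x\<in>{a<..<b}. \<bar>th x\<bar> \<le> M * \<bar>w x\<bar>" and ct: "\<forall>x\<in>{a<..<b}. isCont th x"
  shows "continuous_on {a..b} (\<lambda>x. if x \<in> {a<..<b} then th x else 0)"
  unfolding continuous_on_eq_continuous_within
proof
  fix x assume x: "x \<in> {a..b}"
  define h where "h = (\<lambda>x. if x \<in> {a<..<b} then th x else 0)"
  show "continuous (at x within {a..b}) h"
  proof (cases "x \<in> {a<..<b}")
    case True
    have "eventually (\<lambda>y. h y = th y) (nhds x)"
      unfolding eventually_nhds h_def using True by (intro exI[of _ "{a<..<b}"]) auto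
    hence "isCont h x \<longleftrightarrow> isCont th x" by (rule isCont_cong)
    hence "isCont h x" using ct True by blast
    thus ?thesis by (rule continuous_at_imp_continuous_within)
  next
    case False
    hence xe: "x = a \<or> x = b" using x by auto
    hence hx: "h x = 0" "w x = 0" unfolding h_def using wa wb by auto
    have "(w \<longlongrightarrow> w x) (at x within {a..b})"
      using wc x unfolding continuous_on_eq_continuous_within continuous_within by blast
    hence "((\<lambda>y. \<bar>M\<bar> * \<bar>w y\<bar>) \<longlongrightarrow> \<bar>M\<bar> * \<bar>w x\<bar>) (at x within {a..b})"
      by (intro tendsto_intros)
    hence g0: "((\<lambda>y. \<bar>M\<bar> * \<bar>w y\<bar>) \<longlongrightarrow> 0) (at x within {a..b})" using hx by simp
    have ev: "eventually (\<lambda>y. norm (h y) \<le> \<bar>M\<bar> * \<bar>w y\<bar>) (at x within {a..b})"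
    proof -
      have "norm (h y) \<le> \<bar>M\<bar> * \<bar>w y\<bar>" for y
      proof (cases "y \<in> {a<..<b}")
        case True
        hence "\<bar>th y\<bar> \<le> M * \<bar>w y\<bar>" using bd by blast
        also have "\<dots> \<le> \<bar>M\<bar> * \<bar>w y\<bar>" by (intro mult_right_mono) auto
        finally show ?thesis using True unfolding h_def by simp
      next
        case False
        have "h y = 0" unfolding h_def using if_not_P[OF False, of "th y" 0] .
        thus ?thesis by simp
      qed
      thus ?thesis by simp
    qed
    have "(h \<longlongrightarrow> 0) (at x within {a..b})" by (rule Lim_null_comparison[OF ev g0])
    thus ?thesis unfolding continuous_within hx .
  qed
qed

lemma ftc0:
  fixes f f' :: "real \<Rightarrow> real"
  assumes "a \<le> b" "continuous_on {a..b} f" "f a = f b"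
    "\<forall>x\<in>{a<..<b}. (f has_real_derivative f' x) (at x)"
  shows "(f' has_integral 0) {a..b}"
proof -
  have "(f' has_integral (f b - f a)) {a..b}"
    using assms by (intro fundamental_theorem_of_calculus_interior)
      (auto simp: has_real_derivative_iff_has_vector_derivative)
  thus ?thesis using assms(3) by simp
qed

lemma integral_le_open:
  fixes f g :: "real \<Rightarrow> real"
  assumes "f integrable_on {a..b}" "g integrable_on {a..b}" "\<forall>x\<in>{a<..<b}. f x \<le> g x"
  shows "integral {a..b} f \<le> integral {a..b} g"
proof -
  define f2 where "f2 x = (if x \<in> {a<..<b} then f x else g x)" for x
  have sp: "\<And>x. x \<in> {a..b} - {a, b} \<Longrightarrow> f2 x = f x" unfolding f2_def by auto
  have "integral {a..b} f2 = integral {a..b} f"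
    by (rule integral_spike[of "{a,b}"]) (use sp in auto)
  moreover have "f2 integrable_on {a..b}"
    by (rule integrable_spike_finite[of "{a,b}" _ _ f]) (use sp assms(1) in auto)
  moreover have "integral {a..b} f2 \<le> integral {a..b} g"
    using assms \<open>f2 integrable_on {a..b}\<close> unfolding f2_def by (intro integral_le) auto
  ultimately show ?thesis by simp
qed

lemma integral_nonneg_open:
  fixes f :: "real \<Rightarrow> real"
  assumes "f integrable_on {a..b}" "\<forall>x\<in>{a<..<b}. 0 \<le> f x"
  shows "0 \<le> integral {a..b} f"
  using integral_le_open[OF integrable_0 assms(1)] assms(2) by simp

lemma hardy:
  fixes w w' Nn :: "real \<Rightarrow> real"
  assumes cd: "c \<le> d" and wc: "continuous_on {c..d} w"
    and wd: "\<forall>x\<in>{c<..<d}. (w has_real_derivative w' x) (at x)"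
    and bc: "d * (w d)\<^sup>2 = c * (w c)\<^sup>2"
    and Ni: "Nn integrable_on {c..d}" and Q: "Q \<ge> 0"
    and pt: "\<forall>x\<in>{c<..<d}. x\<^sup>2 * (w' x)\<^sup>2 \<le> Q * Nn x"
  shows "integral {c..d} (\<lambda>x. (w x)\<^sup>2) \<le> 4 * Q * integral {c..d} Nn"
proof -
  define z where "z x = x * (w x)\<^sup>2" for x
  have zc: "continuous_on {c..d} z" unfolding z_def using wc by (intro continuous_intros)
  have zd: "\<forall>x\<in>{c<..<d}. (z has_real_derivative ((w x)\<^sup>2 + 2 * (x * w x * w' x))) (at x)"
  proof
    fix x assume "x \<in> {c<..<d}"
    hence "(w has_real_derivative w' x) (at x)" using wd by blast
    hence "(z has_real_derivative (1 * (w x)\<^sup>2 + x * (2 * w x * w' x))) (at x)"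
      unfolding z_def by (auto intro!: derivative_eq_intros)
    thus "(z has_real_derivative ((w x)\<^sup>2 + 2 * (x * w x * w' x))) (at x)" by (simp add: algebra_simps)
  qed
  have I0: "((\<lambda>x. (w x)\<^sup>2 + 2 * (x * w x * w' x)) has_integral 0) {c..d}"
    using ftc0[OF cd zc _ zd] bc unfolding z_def by simp
  have wi: "(\<lambda>x. (w x)\<^sup>2) integrable_on {c..d}"
    using wc by (intro integrable_continuous_real continuous_intros)
  have "integral {c..d} (\<lambda>x. (w x)\<^sup>2 / 2 - 2 * Q * Nn x) \<le> integral {c..d} (\<lambda>x. (w x)\<^sup>2 + 2 * (x * w x * w' x))"
  proof (rule integral_le_open)
    show "(\<lambda>x. (w x)\<^sup>2 / 2 - 2 * Q * Nn x) integrable_on {c..d}"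
      using wi Ni by (intro integrable_diff integrable_on_mult_right integrable_on_divide) auto
    show "(\<lambda>x. (w x)\<^sup>2 + 2 * (x * w x * w' x)) integrable_on {c..d}" using I0 by blast
    show "\<forall>x\<in>{c<..<d}. (w x)\<^sup>2 / 2 - 2 * Q * Nn x \<le> (w x)\<^sup>2 + 2 * (x * w x * w' x)"
    proof
      fix x assume x: "x \<in> {c<..<d}"
      have "0 \<le> (w x + 2 * x * w' x)\<^sup>2" by simp
      moreover have "(w x + 2 * x * w' x)\<^sup>2 = (w x)\<^sup>2 + 4 * (x * w x * w' x) + 4 * (x\<^sup>2 * (w' x)\<^sup>2)"
        by (simp add: power2_eq_square algebra_simps)
      ultimately have "- 2 * (x * w x * w' x) \<le> (w x)\<^sup>2 / 2 + 2 * (x\<^sup>2 * (w' x)\<^sup>2)"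
        by linarith
      moreover have "x\<^sup>2 * (w' x)\<^sup>2 \<le> Q * Nn x" using pt x by blast
      ultimately show "(w x)\<^sup>2 / 2 - 2 * Q * Nn x \<le> (w x)\<^sup>2 + 2 * (x * w x * w' x)" by linarith
    qed
  qed
  also have "\<dots> = 0" using I0 by (rule integral_unique)
  finally have "integral {c..d} (\<lambda>x. (w x)\<^sup>2 / 2 - 2 * Q * Nn x) \<le> 0" .
  moreover have "integral {c..d} (\<lambda>x. (w x)\<^sup>2 / 2 - 2 * Q * Nn x)
      = integral {c..d} (\<lambda>x. (w x)\<^sup>2) / 2 - 2 * Q * integral {c..d} Nn"
    using wi Ni by (simp add: integral_diff integrable_on_divide integrable_on_mult_right)
  ultimately show ?thesis by simp
qed

lemma amgm_K:
  fixes P R K a b :: real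
  assumes "R > 0" "P \<ge> 0" "K\<^sup>2 \<le> 4 * P * R"
  shows "2 * K * a * b \<le> R * b\<^sup>2 / 2 + 8 * P * a\<^sup>2"
proof -
  have "R * (R * b\<^sup>2 / 2 + 8 * P * a\<^sup>2 - 2 * K * a * b) = (R * b - 2 * K * a)\<^sup>2 / 2 + 2 * (4 * P * R - K\<^sup>2) * a\<^sup>2"
    by (simp add: power2_eq_square field_simps)
  also have "\<dots> \<ge> 0" using assms(3) by (intro add_nonneg_nonneg mult_nonneg_nonneg) auto
  finally have "R * (R * b\<^sup>2 / 2 + 8 * P * a\<^sup>2 - 2 * K * a * b) \<ge> 0" .
  thus ?thesis using assms(1) by (simp add: zero_le_mult_iff)
qed


lemma key_alg:
  fixes v1 v2 u1 u2 g1 g2 h1 h2 P K R :: real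
  assumes "g1 \<noteq> 0" "g2 \<noteq> 0"
  shows "v1\<^sup>2 + v2\<^sup>2 + P * u1\<^sup>2 + R * u2\<^sup>2 - 2 * K * u1 * u2 =
    ((v1 - h1 / g1 * u1)\<^sup>2 + (v2 - h2 / g2 * u2)\<^sup>2 + K * g1 * g2 * (u1 / g1 - u2 / g2)\<^sup>2) +
    (((P * g1 - K * g2) * g1 - h1 * h1) / (g1 * g1) * (u1 * u1) + (v1 * u1 + v1 * u1) * (h1 / g1) +
     (((R * g2 - K * g1) * g2 - h2 * h2) / (g2 * g2) * (u2 * u2) + (v2 * u2 + v2 * u2) * (h2 / g2)))"
proof -
  have e1: "(v1 - h1 / g1 * u1)\<^sup>2 = v1\<^sup>2 - (v1 * u1 + v1 * u1) * (h1 / g1) + h1 * h1 / (g1 * g1) * (u1 * u1)"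
    using assms by (simp add: power2_eq_square field_simps)
  have e2: "(v2 - h2 / g2 * u2)\<^sup>2 = v2\<^sup>2 - (v2 * u2 + v2 * u2) * (h2 / g2) + h2 * h2 / (g2 * g2) * (u2 * u2)"
    using assms by (simp add: power2_eq_square field_simps)
  have e3: "K * g1 * g2 * (u1 / g1 - u2 / g2)\<^sup>2 = K * g2 / g1 * (u1 * u1) - 2 * K * u1 * u2 + K * g1 / g2 * (u2 * u2)"
    using assms by (simp add: power2_eq_square field_simps)
  have e4: "((P * g1 - K * g2) * g1 - h1 * h1) / (g1 * g1) * (u1 * u1) = P * u1\<^sup>2 - K * g2 / g1 * (u1 * u1) - h1 * h1 / (g1 * g1) * (u1 * u1)"
    using assms by (simp add: power2_eq_square field_simps)
  have e5: "((R * g2 - K * g1) * g2 - h2 * h2) / (g2 * g2) * (u2 * u2) = R * u2\<^sup>2 - K * g1 / g2 * (u2 * u2) - h2 * h2 / (g2 * g2) * (u2 * u2)"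
    using assms by (simp add: power2_eq_square field_simps)
  show ?thesis unfolding e1 e2 e3 e4 e5 by simp
qed

lemma deriv_bound:
  fixes phi phi' :: "real \<Rightarrow> real"
  assumes d: "\<forall>t\<in>{a<..<b}. (phi has_real_derivative phi' t) (at t)"
    and bd: "\<forall>t\<in>{a<..<b}. \<bar>phi' t\<bar> \<le> M"
    and c: "c \<in> {a<..<b}" and x: "x \<in> {a<..<b}"
  shows "\<bar>phi x\<bar> \<le> \<bar>phi c\<bar> + M * (b - a)"
proof -
  have M0: "M \<ge> 0" using bd c by force
  have gen: "\<bar>phi y - phi z\<bar> \<le> M * (b - a)" if yz: "z < y" "z \<in> {a<..<b}" "y \<in> {a<..<b}" for y z
  proof -
    have "\<forall>t. z \<le> t \<and> t \<le> y \<longrightarrow> (phi has_real_derivative phi' t) (at t)"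
      using d yz by auto
    then obtain t where t: "z < t" "t < y" "phi y - phi z = (y - z) * phi' t"
      using MVT2[of z y phi phi'] yz(1) by blast
    have "\<bar>phi y - phi z\<bar> = (y - z) * \<bar>phi' t\<bar>" using t by (simp add: abs_mult)
    also have "\<dots> \<le> (b - a) * M"
      using yz t bd by (intro mult_mono) auto
    finally show ?thesis by (simp add: mult.commute)
  qed
  consider "x < c" | "x = c" | "c < x" by linarith
  thus ?thesis
  proof cases
    case 1 thus ?thesis using gen[of x c] c x by (smt (verit))
  next
    case 3 thus ?thesis using gen[of c x] c x by (smt (verit))
  qed (use M0 c in auto)
qed

locale esys =
  fixes L :: real and P K R g1 g2 g1' g2' :: "real \<Rightarrow> real" and m B r0 p1 Am :: real
  assumes L: "L > 0"
  and cP: "continuous_on {-L..L} P" and cK: "continuous_on {-L..L} K" and cR: "continuous_on {-L..L} R"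
  and g1d: "\<And>x. (g1 has_real_derivative g1' x) (at x)"
  and g2d: "\<And>x. (g2 has_real_derivative g2' x) (at x)"
  and g1dd: "\<And>x. (g1' has_real_derivative (P x * g1 x - K x * g2 x)) (at x)"
  and g2dd: "\<And>x. (g2' has_real_derivative (R x * g2 x - K x * g1 x)) (at x)"
  and gpos: "\<And>x. x \<in> {-L..L} \<Longrightarrow> g1 x > 0 \<and> g2 x > 0"
  and coef: "\<And>x. x \<in> {-L..L} \<Longrightarrow> 0 \<le> P x \<and> 0 \<le> R x \<and> 0 \<le> K x \<and> (K x)\<^sup>2 \<le> 4 * P x * R x
              \<and> P x \<le> Am \<and> R x \<le> Am \<and> K x \<le> Am"
  and right: "\<And>x. x \<in> {0..L} \<Longrightarrow> r0 \<le> R x \<and> P x \<le> p1 \<and> m \<le> g1 x \<and> g1 x \<le> B"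
  and left: "\<And>x. x \<in> {-L..0} \<Longrightarrow> r0 \<le> P x \<and> R x \<le> p1 \<and> m \<le> g2 x \<and> g2 x \<le> B"
  and m0: "m > 0" and r00: "r0 > 0" and p10: "p1 \<ge> 0"
begin

lemma Am0: "Am \<ge> 0" using coef[of 0] L by auto

definition c1 where "c1 = 4 * B\<^sup>2 * L\<^sup>2 / m\<^sup>2"
definition cS where "cS = 2 * c1 + 2 * (1 + 14 * p1 * c1) / r0"

lemma c1nn: "c1 \<ge> 0" unfolding c1_def by simp
lemma cSpos: "cS > 0" proof -
  have "p1 * c1 \<ge> 0" using c1nn p10 by simp
  hence "2 * (1 + 14 * p1 * c1) / r0 > 0" using r00 by (intro divide_pos_pos) auto
  thus ?thesis unfolding cS_def using c1nn by linarith
qed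

lemma g1c: "continuous_on S g1" using g1d by (meson DERIV_isCont continuous_at_imp_continuous_on)
lemma g2c: "continuous_on S g2" using g2d by (meson DERIV_isCont continuous_at_imp_continuous_on)
lemma g1'c: "continuous_on S g1'" using g1dd by (meson DERIV_isCont continuous_at_imp_continuous_on)
lemma g2'c: "continuous_on S g2'" using g2dd by (meson DERIV_isCont continuous_at_imp_continuous_on)

end

locale esol = esys +
  fixes f1 f2 u1 u2 u1' u2' :: "real \<Rightarrow> real" and F :: real
  assumes sol: "odesol (-L) L P K R f1 f2 u1 u2 u1' u2'"
  and bc: "u1 (-L) = 0" "u1 L = 0" "u2 (-L) = 0" "u2 L = 0"
  and cf1: "continuous_on {-L..L} f1" and cf2: "continuous_on {-L..L} f2"
  and fb: "\<And>x. x \<in> {-L<..<L} \<Longrightarrow> \<bar>f1 x\<bar> \<le> F \<and> \<bar>f2 x\<bar> \<le> F"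
begin

lemma cu1: "continuous_on {-L..L} u1" and cu2: "continuous_on {-L..L} u2"
  using sol unfolding odesol_def by auto

definition "dd1 x = P x * u1 x - K x * u2 x - f1 x"
definition "dd2 x = R x * u2 x - K x * u1 x - f2 x"

lemma du: "x \<in> {-L<..<L} \<Longrightarrow> (u1 has_real_derivative u1' x) (at x) \<and> (u2 has_real_derivative u2' x) (at x) \<and>
   (u1' has_real_derivative dd1 x) (at x) \<and> (u2' has_real_derivative dd2 x) (at x)"
  using sol unfolding odesol_def dd1_def dd2_def by auto

lemma cdd1: "continuous_on {-L..L} dd1" unfolding dd1_def
  using cP cK cf1 cu1 cu2 by (intro continuous_intros)
lemma cdd2: "continuous_on {-L..L} dd2" unfolding dd2_def
  using cR cK cf2 cu1 cu2 by (intro continuous_intros)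

lemma F0: "F \<ge> 0" using fb[of 0] L by auto

lemma u'bd: "\<exists>Bd. \<forall>x\<in>{-L<..<L}. \<bar>u1' x\<bar> \<le> Bd \<and> \<bar>u2' x\<bar> \<le> Bd"
proof -
  obtain M1 where M1: "\<forall>x\<in>{-L..L}. norm (dd1 x) \<le> M1" using cont_bounded_interval[OF cdd1] by blast
  obtain M2 where M2: "\<forall>x\<in>{-L..L}. norm (dd2 x) \<le> M2" using cont_bounded_interval[OF cdd2] by blast
  have z: "0 \<in> {-L<..<L}" using L by auto
  have b1: "\<bar>u1' x\<bar> \<le> \<bar>u1' 0\<bar> + M1 * (L - - L)" if "x \<in> {-L<..<L}" for x
    by (rule deriv_bound[of "-L" L u1' dd1 M1 0 x]) (use du M1 z that in auto)
  have b2: "\<bar>u2' x\<bar> \<le> \<bar>u2' 0\<bar> + M2 * (L - - L)" if "x \<in> {-L<..<L}" for x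
    by (rule deriv_bound[of "-L" L u2' dd2 M2 0 x]) (use du M2 z that in auto)
  show ?thesis
    by (rule exI[of _ "\<bar>u1' 0\<bar> + M1 * (L - - L) + \<bar>u2' 0\<bar> + M2 * (L - - L)"])
      (use b1 b2 in \<open>smt (verit)\<close>)
qed

definition "th1d x = (u1' x)\<^sup>2 + u1 x * dd1 x"
definition "th2d x = (u2' x)\<^sup>2 + u2 x * dd2 x"

lemma th_int: "(th1d has_integral 0) {-L..L}" "(th2d has_integral 0) {-L..L}"
proof -
  obtain Bd where Bd: "\<forall>x\<in>{-L<..<L}. \<bar>u1' x\<bar> \<le> Bd \<and> \<bar>u2' x\<bar> \<le> Bd" using u'bd by blast
  have LL: "-L < L" using L by simp
  {
    fix u u' dd :: "real \<Rightarrow> real"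
    assume cu: "continuous_on {-L..L} u" and ua: "u (-L) = 0" and ub: "u L = 0"
      and bd: "\<forall>x\<in>{-L<..<L}. \<bar>u' x\<bar> \<le> Bd"
      and d: "\<forall>x\<in>{-L<..<L}. (u has_real_derivative u' x) (at x) \<and> (u' has_real_derivative dd x) (at x)"
    define h where "h x = (if x \<in> {-L<..<L} then u x * u' x else 0)" for x
    have hc: "continuous_on {-L..L} h" unfolding h_def
    proof (rule ext_cont[OF LL cu ua ub])
      show "\<forall>x\<in>{-L<..<L}. \<bar>u x * u' x\<bar> \<le> Bd * \<bar>u x\<bar>"
      proof
        fix x assume "x \<in> {-L<..<L}"
        hence "\<bar>u' x\<bar> \<le> Bd" using bd by blast
        thus "\<bar>u x * u' x\<bar> \<le> Bd * \<bar>u x\<bar>"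
          using mult_right_mono[of "\<bar>u' x\<bar>" Bd "\<bar>u x\<bar>"] by (simp add: abs_mult mult.commute)
      qed
      show "\<forall>x\<in>{-L<..<L}. isCont (\<lambda>x. u x * u' x) x"
      proof
        fix x assume "x \<in> {-L<..<L}"
        hence "isCont u x" "isCont u' x" using d DERIV_isCont by blast+
        thus "isCont (\<lambda>x. u x * u' x) x" by (rule isCont_mult)
      qed
    qed
    have hd: "\<forall>x\<in>{-L<..<L}. (h has_real_derivative ((u' x)\<^sup>2 + u x * dd x)) (at x)"
    proof
      fix x assume x: "x \<in> {-L<..<L}"
      have "((\<lambda>x. u x * u' x) has_real_derivative (u' x * u' x + u x * dd x)) (at x)"
        using d x by (auto intro!: derivative_eq_intros)
      hence "((\<lambda>x. u x * u' x) has_real_derivative ((u' x)\<^sup>2 + u x * dd x)) (at x)"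
        by (simp add: power2_eq_square)
      thus "(h has_real_derivative ((u' x)\<^sup>2 + u x * dd x)) (at x)"
        by (rule has_field_derivative_transform_within_open[of _ _ _ "{-L<..<L}"]) (use x in \<open>auto simp: h_def\<close>)
    qed
    have "((\<lambda>x. (u' x)\<^sup>2 + u x * dd x) has_integral 0) {-L..L}"
      by (rule ftc0[OF _ hc _ hd]) (use L in \<open>auto simp: h_def\<close>)
  } note gen = this
  show "(th1d has_integral 0) {-L..L}" unfolding th1d_def
    by (rule gen[OF cu1 bc(1) bc(2)]) (use Bd du in auto)
  show "(th2d has_integral 0) {-L..L}" unfolding th2d_def
    by (rule gen[OF cu2 bc(3) bc(4)]) (use Bd du in auto)
qed

definition "q1 x = g1' x / g1 x"
definition "q2 x = g2' x / g2 x"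
definition "qd1 x = ((P x * g1 x - K x * g2 x) * g1 x - g1' x * g1' x) / (g1 x * g1 x)"
definition "qd2 x = ((R x * g2 x - K x * g1 x) * g2 x - g2' x * g2' x) / (g2 x * g2 x)"
definition "psi x = q1 x * (u1 x * u1 x) + q2 x * (u2 x * u2 x)"
definition "psid x = qd1 x * (u1 x * u1 x) + (u1' x * u1 x + u1' x * u1 x) * q1 x
                   + (qd2 x * (u2 x * u2 x) + (u2' x * u2 x + u2' x * u2 x) * q2 x)"

lemma psi_int: "(psid has_integral 0) {-L..L}"
proof (rule ftc0)
  show "-L \<le> L" using L by simp
  have gnz: "\<forall>x\<in>{-L..L}. g1 x \<noteq> 0" "\<forall>x\<in>{-L..L}. g2 x \<noteq> 0" using gpos by force+
  show "continuous_on {-L..L} psi" unfolding psi_def q1_def q2_def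
    using g1c g2c g1'c g2'c cu1 cu2 gnz by (intro continuous_intros) auto
  show "psi (-L) = psi L" unfolding psi_def using bc by simp
  show "\<forall>x\<in>{-L<..<L}. (psi has_real_derivative psid x) (at x)"
  proof
    fix x assume x: "x \<in> {-L<..<L}"
    have g: "g1 x \<noteq> 0" "g2 x \<noteq> 0" using gpos[of x] x by auto
    have a1: "(q1 has_real_derivative qd1 x) (at x)" unfolding q1_def qd1_def
      using DERIV_divide[OF g1dd g1d g(1)] .
    have a2: "(q2 has_real_derivative qd2 x) (at x)" unfolding q2_def qd2_def
      using DERIV_divide[OF g2dd g2d g(2)] .
    have b1: "((\<lambda>x. u1 x * u1 x) has_real_derivative (u1' x * u1 x + u1' x * u1 x)) (at x)"
      using du[OF x] by (intro DERIV_mult) auto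
    have b2: "((\<lambda>x. u2 x * u2 x) has_real_derivative (u2' x * u2 x + u2' x * u2 x)) (at x)"
      using du[OF x] by (intro DERIV_mult) auto
    show "(psi has_real_derivative psid x) (at x)"
      unfolding psi_def psid_def
      using DERIV_add[OF DERIV_mult[OF a1 b1] DERIV_mult[OF a2 b2]] by simp
  qed
qed

definition "uf x = u1 x * f1 x + u2 x * f2 x"
definition "Y = integral {-L..L} uf"
definition "Dd x = (u1' x)\<^sup>2 + (u2' x)\<^sup>2 + P x * (u1 x)\<^sup>2 + R x * (u2 x)\<^sup>2 - 2 * K x * u1 x * u2 x"
definition "Nf x = (u1' x - q1 x * u1 x)\<^sup>2 + (u2' x - q2 x * u2 x)\<^sup>2
                 + K x * g1 x * g2 x * (u1 x / g1 x - u2 x / g2 x)\<^sup>2"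

lemma ufc: "continuous_on {-L..L} uf" unfolding uf_def using cu1 cu2 cf1 cf2 by (intro continuous_intros)

lemma D_eq: "Dd x = th1d x + th2d x + uf x"
  unfolding Dd_def th1d_def th2d_def uf_def dd1_def dd2_def by (simp add: power2_eq_square algebra_simps)

lemma D_int: "(Dd has_integral Y) {-L..L}"
proof -
  have "((\<lambda>x. th1d x + th2d x + uf x) has_integral (0 + 0 + Y)) {-L..L}"
    unfolding Y_def using th_int ufc
    by (intro has_integral_add integrable_integral integrable_continuous_real)
  moreover have "Dd = (\<lambda>x. th1d x + th2d x + uf x)" using D_eq by (rule ext)
  ultimately show ?thesis by simp
qed

lemma N_eq: "x \<in> {-L..L} \<Longrightarrow> Dd x = Nf x + psid x"
proof -
  assume x: "x \<in> {-L..L}"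
  have g: "g1 x \<noteq> 0" "g2 x \<noteq> 0" using gpos[OF x] by auto
  show ?thesis unfolding Dd_def Nf_def psid_def q1_def q2_def qd1_def qd2_def
    using key_alg[OF g, of "u1' x" "u2' x" "P x" "u1 x" "R x" "u2 x" "K x" "g1' x" "g2' x"] by simp
qed

lemma N_int: "(Nf has_integral Y) {-L..L}"
proof -
  have "((\<lambda>x. Dd x - psid x) has_integral (Y - 0)) {-L..L}"
    using D_int psi_int by (rule has_integral_diff)
  hence "((\<lambda>x. Dd x - psid x) has_integral Y) {-L..L}" by simp
  moreover have "\<And>x. x \<in> {-L..L} \<Longrightarrow> Dd x - psid x = Nf x" using N_eq by simp
  ultimately show ?thesis by (intro has_integral_eq[of "{-L..L}" "\<lambda>x. Dd x - psid x" Nf Y])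
qed

lemma N_nn: "x \<in> {-L..L} \<Longrightarrow> Nf x \<ge> 0"
proof -
  assume x: "x \<in> {-L..L}"
  have "0 < g1 x" "0 < g2 x" "0 \<le> K x" using gpos[OF x] coef[OF x] by auto
  thus ?thesis unfolding Nf_def by (intro add_nonneg_nonneg mult_nonneg_nonneg) auto
qed

lemma Y_nn: "Y \<ge> 0"
  using N_int N_nn by (rule has_integral_nonneg)

lemma N_half: "integral {0..L} Nf \<le> Y" "integral {-L..0} Nf \<le> Y"
proof -
  have Ni: "Nf integrable_on {-L..L}" using N_int by blast
  have i1: "Nf integrable_on {0..L}" by (rule integrable_subinterval_real[OF Ni]) (use L in auto)
  have i2: "Nf integrable_on {-L..0}" by (rule integrable_subinterval_real[OF Ni]) (use L in auto)
  have sum: "integral {-L..0} Nf + integral {0..L} Nf = Y"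
    using Henstock_Kurzweil_Integration.integral_combine[OF _ _ Ni, of 0] L N_int by (simp add: integral_unique)
  have "integral {-L..0} Nf \<ge> 0" using i2 N_nn by (intro integral_nonneg) auto
  moreover have "integral {0..L} Nf \<ge> 0" using i1 N_nn by (intro integral_nonneg) auto
  ultimately show "integral {0..L} Nf \<le> Y" "integral {-L..0} Nf \<le> Y" using sum by linarith+
qed

end


lemma hardy_app:
  fixes u u' g g' Nn :: "real \<Rightarrow> real"
  assumes cd: "c \<le> d" and cu: "continuous_on {c..d} u" and cg: "continuous_on {c..d} g"
    and gb: "\<forall>x\<in>{c..d}. m \<le> g x \<and> g x \<le> B" and m: "m > 0"
    and der: "\<forall>x\<in>{c<..<d}. (u has_real_derivative u' x) (at x) \<and> (g has_real_derivative g' x) (at x)"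
    and bc: "d * (u d / g d)\<^sup>2 = c * (u c / g c)\<^sup>2"
    and Ni: "Nn integrable_on {c..d}"
    and Nb: "\<forall>x\<in>{c<..<d}. (u' x - g' x / g x * u x)\<^sup>2 \<le> Nn x"
    and xb: "\<forall>x\<in>{c<..<d}. x\<^sup>2 \<le> L\<^sup>2"
  shows "integral {c..d} (\<lambda>x. (u x)\<^sup>2) \<le> 4 * B\<^sup>2 * L\<^sup>2 / m\<^sup>2 * integral {c..d} Nn"
proof -
  have gnz: "\<forall>x\<in>{c..d}. g x \<noteq> 0"
  proof
    fix x assume "x \<in> {c..d}"
    hence "m \<le> g x" using gb by blast
    thus "g x \<noteq> 0" using m by linarith
  qed
  define w where "w x = u x / g x" for x
  define w' where "w' x = (u' x * g x - u x * g' x) / (g x * g x)" for x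
  have wc: "continuous_on {c..d} w" unfolding w_def using cu cg gnz by (intro continuous_intros) auto
  have wd: "\<forall>x\<in>{c<..<d}. (w has_real_derivative w' x) (at x)"
  proof
    fix x assume x: "x \<in> {c<..<d}"
    have "g x \<noteq> 0" using gnz x by auto
    thus "(w has_real_derivative w' x) (at x)"
      unfolding w_def w'_def using der x DERIV_divide by blast
  qed
  have Q0: "L\<^sup>2 / m\<^sup>2 \<ge> 0" by simp
  have pt: "\<forall>x\<in>{c<..<d}. x\<^sup>2 * (w' x)\<^sup>2 \<le> L\<^sup>2 / m\<^sup>2 * Nn x"
  proof
    fix x assume x: "x \<in> {c<..<d}"
    have xx: "x \<in> {c..d}" using x by auto
    have "m \<le> g x \<and> g x \<le> B" using gb xx by blast
    hence gx: "g x \<ge> m" "g x > 0" using m by linarith+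
    define A where "A = (u' x - g' x / g x * u x)\<^sup>2"
    have A0: "A \<ge> 0" unfolding A_def by simp
    have "w' x = (u' x - g' x / g x * u x) / g x" unfolding w'_def using gx by (simp add: field_simps)
    hence w2: "(w' x)\<^sup>2 = A / (g x)\<^sup>2" unfolding A_def by (simp add: power_divide)
    have "m\<^sup>2 \<le> (g x)\<^sup>2" using gx m by (intro power_mono) auto
    moreover have "0 < (g x)\<^sup>2 * m\<^sup>2" using gx m by simp
    ultimately have "A / (g x)\<^sup>2 \<le> A / m\<^sup>2" using A0 by (intro divide_left_mono) auto
    also have "\<dots> \<le> Nn x / m\<^sup>2" using Nb x unfolding A_def by (intro divide_right_mono) auto
    finally have wb: "(w' x)\<^sup>2 \<le> Nn x / m\<^sup>2" using w2 by simp
    have "x\<^sup>2 * (w' x)\<^sup>2 \<le> L\<^sup>2 * (Nn x / m\<^sup>2)"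
      using xb x wb by (intro mult_mono) auto
    thus "x\<^sup>2 * (w' x)\<^sup>2 \<le> L\<^sup>2 / m\<^sup>2 * Nn x" by simp
  qed
  have hw: "integral {c..d} (\<lambda>x. (w x)\<^sup>2) \<le> 4 * (L\<^sup>2 / m\<^sup>2) * integral {c..d} Nn"
    by (rule hardy[OF cd wc wd _ Ni Q0 pt]) (use bc in \<open>simp add: w_def\<close>)
  have wi: "(\<lambda>x. (w x)\<^sup>2) integrable_on {c..d}" using wc by (intro integrable_continuous_real continuous_intros)
  have ui: "(\<lambda>x. (u x)\<^sup>2) integrable_on {c..d}" using cu by (intro integrable_continuous_real continuous_intros)
  have "integral {c..d} (\<lambda>x. (u x)\<^sup>2) \<le> integral {c..d} (\<lambda>x. B\<^sup>2 * (w x)\<^sup>2)"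
  proof (rule integral_le[OF ui])
    show "(\<lambda>x. B\<^sup>2 * (w x)\<^sup>2) integrable_on {c..d}" using wi by (rule integrable_on_mult_right)
    fix x assume xx: "x \<in> {c..d}"
    have "m \<le> g x \<and> g x \<le> B" using gb xx by blast
    hence gx: "g x \<ge> m" "g x \<le> B" "g x > 0" using m by linarith+
    have "(u x)\<^sup>2 = (g x)\<^sup>2 * (w x)\<^sup>2" unfolding w_def using gx by (simp add: power_divide)
    also have "\<dots> \<le> B\<^sup>2 * (w x)\<^sup>2" using gx by (intro mult_right_mono power_mono) auto
    finally show "(u x)\<^sup>2 \<le> B\<^sup>2 * (w x)\<^sup>2" .
  qed
  also have "\<dots> = B\<^sup>2 * integral {c..d} (\<lambda>x. (w x)\<^sup>2)" by simp
  also have "\<dots> \<le> B\<^sup>2 * (4 * (L\<^sup>2 / m\<^sup>2) * integral {c..d} Nn)"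
    using hw by (intro mult_left_mono) auto
  also have "\<dots> = 4 * B\<^sup>2 * L\<^sup>2 / m\<^sup>2 * integral {c..d} Nn" by (simp add: field_simps)
  finally show ?thesis .
qed

lemma amgm_F:
  fixes a f e F :: real
  assumes "e > 0" "\<bar>f\<bar> \<le> F"
  shows "a * f \<le> e * a\<^sup>2 + F\<^sup>2 / (4 * e)"
proof -
  have "a * f \<le> \<bar>a\<bar> * F" using assms(2) by (metis abs_ge_self abs_mult mult_left_mono abs_ge_zero order_trans)
  moreover have "\<bar>a\<bar> * F \<le> e * a\<^sup>2 + F\<^sup>2 / (4 * e)"
  proof -
    have "0 \<le> (2 * e * \<bar>a\<bar> - F)\<^sup>2 / (4 * e)" using assms(1) by simp
    also have "(2 * e * \<bar>a\<bar> - F)\<^sup>2 / (4 * e) = e * a\<^sup>2 - \<bar>a\<bar> * F + F\<^sup>2 / (4 * e)"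
      using assms(1) by (simp add: power2_eq_square field_simps)
    finally show ?thesis by simp
  qed
  ultimately show ?thesis by linarith
qed

lemma amgm_d:
  fixes a b d :: real
  assumes "d > 0"
  shows "b * a + b * a \<le> d * a\<^sup>2 + b\<^sup>2 / d"
proof -
  have "0 \<le> (d * a - b)\<^sup>2 / d" using assms by simp
  also have "(d * a - b)\<^sup>2 / d = d * a\<^sup>2 - 2 * (a * b) + b\<^sup>2 / d"
    using assms by (simp add: power2_eq_square field_simps)
  finally show ?thesis by (simp add: algebra_simps)
qed

context esol
begin

lemma sqi: "{a..b} \<subseteq> {-L..L} \<Longrightarrow> (\<lambda>x. (u1 x)\<^sup>2) integrable_on {a..b}"
  "{a..b} \<subseteq> {-L..L} \<Longrightarrow> (\<lambda>x. (u2 x)\<^sup>2) integrable_on {a..b}"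
  using continuous_on_subset[OF cu1] continuous_on_subset[OF cu2]
  by (auto intro!: integrable_continuous_real continuous_intros)

lemma Ni: "Nf integrable_on {-L..L}" using N_int by blast
lemma Di: "Dd integrable_on {-L..L}" using D_int by blast

lemma I1: "integral {0..L} (\<lambda>x. (u1 x)\<^sup>2) \<le> c1 * Y"
proof -
  have "integral {0..L} (\<lambda>x. (u1 x)\<^sup>2) \<le> 4 * B\<^sup>2 * L\<^sup>2 / m\<^sup>2 * integral {0..L} Nf"
  proof (rule hardy_app[where g = g1 and g' = g1' and u' = u1' and m = m and B = B])
    show "0 \<le> L" using L by simp
    show "continuous_on {0..L} u1" using cu1 by (rule continuous_on_subset) auto
    show "continuous_on {0..L} g1" by (rule g1c)
    show "\<forall>x\<in>{0..L}. m \<le> g1 x \<and> g1 x \<le> B" using right by auto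
    show "m > 0" by (rule m0)
    show "\<forall>x\<in>{0<..<L}. (u1 has_real_derivative u1' x) (at x) \<and> (g1 has_real_derivative g1' x) (at x)"
      using du g1d L by auto
    show "L * (u1 L / g1 L)\<^sup>2 = 0 * (u1 0 / g1 0)\<^sup>2" using bc by simp
    show "Nf integrable_on {0..L}" by (rule integrable_subinterval_real[OF Ni]) (use L in auto)
    show "\<forall>x\<in>{0<..<L}. (u1' x - g1' x / g1 x * u1 x)\<^sup>2 \<le> Nf x"
    proof
      fix x assume x: "x \<in> {0<..<L}"
      hence xx: "x \<in> {-L..L}" by auto
      have "0 < g1 x" "0 < g2 x" "0 \<le> K x" using gpos[OF xx] coef[OF xx] by auto
      hence "0 \<le> (u2' x - q2 x * u2 x)\<^sup>2 + K x * g1 x * g2 x * (u1 x / g1 x - u2 x / g2 x)\<^sup>2"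
        by (intro add_nonneg_nonneg mult_nonneg_nonneg) auto
      thus "(u1' x - g1' x / g1 x * u1 x)\<^sup>2 \<le> Nf x" unfolding Nf_def q1_def by simp
    qed
    show "\<forall>x\<in>{0<..<L}. x\<^sup>2 \<le> L\<^sup>2" by (auto intro: power_mono)
  qed
  also have "\<dots> \<le> 4 * B\<^sup>2 * L\<^sup>2 / m\<^sup>2 * Y" using N_half(1) by (intro mult_left_mono) auto
  finally show ?thesis unfolding c1_def .
qed

lemma I2: "integral {-L..0} (\<lambda>x. (u2 x)\<^sup>2) \<le> c1 * Y"
proof -
  have "integral {-L..0} (\<lambda>x. (u2 x)\<^sup>2) \<le> 4 * B\<^sup>2 * L\<^sup>2 / m\<^sup>2 * integral {-L..0} Nf"
  proof (rule hardy_app[where g = g2 and g' = g2' and u' = u2' and m = m and B = B])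
    show "-L \<le> 0" using L by simp
    show "continuous_on {-L..0} u2" using cu2 by (rule continuous_on_subset) auto
    show "continuous_on {-L..0} g2" by (rule g2c)
    show "\<forall>x\<in>{-L..0}. m \<le> g2 x \<and> g2 x \<le> B" using left by auto
    show "m > 0" by (rule m0)
    show "\<forall>x\<in>{-L<..<0}. (u2 has_real_derivative u2' x) (at x) \<and> (g2 has_real_derivative g2' x) (at x)"
      using du g2d L by auto
    show "0 * (u2 0 / g2 0)\<^sup>2 = - L * (u2 (-L) / g2 (-L))\<^sup>2" using bc by simp
    show "Nf integrable_on {-L..0}" by (rule integrable_subinterval_real[OF Ni]) (use L in auto)
    show "\<forall>x\<in>{-L<..<0}. (u2' x - g2' x / g2 x * u2 x)\<^sup>2 \<le> Nf x"
    proof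
      fix x assume x: "x \<in> {-L<..<0}"
      hence xx: "x \<in> {-L..L}" by auto
      have "0 < g1 x" "0 < g2 x" "0 \<le> K x" using gpos[OF xx] coef[OF xx] by auto
      hence "0 \<le> (u1' x - q1 x * u1 x)\<^sup>2 + K x * g1 x * g2 x * (u1 x / g1 x - u2 x / g2 x)\<^sup>2"
        by (intro add_nonneg_nonneg mult_nonneg_nonneg) auto
      thus "(u2' x - g2' x / g2 x * u2 x)\<^sup>2 \<le> Nf x" unfolding Nf_def q2_def by simp
    qed
    show "\<forall>x\<in>{-L<..<0}. x\<^sup>2 \<le> L\<^sup>2"
    proof
      fix x assume "x \<in> {-L<..<0}"
      hence "\<bar>x\<bar> \<le> L" by auto
      hence "\<bar>x\<bar>\<^sup>2 \<le> L\<^sup>2" by (intro power_mono) auto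
      thus "x\<^sup>2 \<le> L\<^sup>2" by simp
    qed
  qed
  also have "\<dots> \<le> 4 * B\<^sup>2 * L\<^sup>2 / m\<^sup>2 * Y" using N_half(2) by (intro mult_left_mono) auto
  finally show ?thesis unfolding c1_def .
qed

lemma D_right: "x \<in> {0<..<L} \<Longrightarrow> r0 / 2 * (u2 x)\<^sup>2 - 7 * p1 * (u1 x)\<^sup>2 \<le> Dd x"
proof -
  assume x: "x \<in> {0<..<L}"
  have xx: "x \<in> {-L..L}" "x \<in> {0..L}" using x by auto
  have c: "0 \<le> P x" "(K x)\<^sup>2 \<le> 4 * P x * R x" using coef[OF xx(1)] by auto
  have r: "r0 \<le> R x" "P x \<le> p1" using right[OF xx(2)] by auto
  have Rp: "R x > 0" using r r00 by linarith
  have am: "2 * K x * u1 x * u2 x \<le> R x * (u2 x)\<^sup>2 / 2 + 8 * P x * (u1 x)\<^sup>2"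
    using amgm_K[of "R x" "P x" "K x" "u1 x" "u2 x"] Rp c by simp
  have "r0 * (u2 x)\<^sup>2 \<le> R x * (u2 x)\<^sup>2" using r by (intro mult_right_mono) auto
  moreover have "P x * (u1 x)\<^sup>2 \<le> p1 * (u1 x)\<^sup>2" using r by (intro mult_right_mono) auto
  moreover have "0 \<le> (u1' x)\<^sup>2 + (u2' x)\<^sup>2" by simp
  ultimately show ?thesis using am unfolding Dd_def by linarith
qed

lemma D_left: "x \<in> {-L<..<0} \<Longrightarrow> r0 / 2 * (u1 x)\<^sup>2 - 7 * p1 * (u2 x)\<^sup>2 \<le> Dd x"
proof -
  assume x: "x \<in> {-L<..<0}"
  have xx: "x \<in> {-L..L}" "x \<in> {-L..0}" using x by auto
  have c: "0 \<le> R x" "(K x)\<^sup>2 \<le> 4 * R x * P x" using coef[OF xx(1)] by (auto simp: mult.commute mult.left_commute)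
  have r: "r0 \<le> P x" "R x \<le> p1" using left[OF xx(2)] by auto
  have Pp: "P x > 0" using r r00 by linarith
  have am: "2 * K x * u2 x * u1 x \<le> P x * (u1 x)\<^sup>2 / 2 + 8 * R x * (u2 x)\<^sup>2"
    using amgm_K[of "P x" "R x" "K x" "u2 x" "u1 x"] Pp c by simp
  have "r0 * (u1 x)\<^sup>2 \<le> P x * (u1 x)\<^sup>2" using r by (intro mult_right_mono) auto
  moreover have "R x * (u2 x)\<^sup>2 \<le> p1 * (u2 x)\<^sup>2" using r by (intro mult_right_mono) auto
  moreover have "0 \<le> (u1' x)\<^sup>2 + (u2' x)\<^sup>2" by simp
  moreover have "2 * K x * u2 x * u1 x = 2 * K x * u1 x * u2 x" by simp
  ultimately show ?thesis using am unfolding Dd_def by linarith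
qed

definition "S = integral {-L..L} (\<lambda>x. (u1 x)\<^sup>2 + (u2 x)\<^sup>2)"

lemma S_le: "S \<le> cS * Y"
proof -
  have sub1: "{0..L} \<subseteq> {-L..L}" "{-L..0} \<subseteq> {-L..L}" using L by auto
  define I1 where "I1 = integral {0..L} (\<lambda>x. (u1 x)\<^sup>2)"
  define J1 where "J1 = integral {-L..0} (\<lambda>x. (u1 x)\<^sup>2)"
  define I2 where "I2 = integral {-L..0} (\<lambda>x. (u2 x)\<^sup>2)"
  define J2 where "J2 = integral {0..L} (\<lambda>x. (u2 x)\<^sup>2)"
  have Dr: "integral {0..L} (\<lambda>x. r0 / 2 * (u2 x)\<^sup>2 - 7 * p1 * (u1 x)\<^sup>2) \<le> integral {0..L} Dd"
    by (rule integral_le_open)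
      (use sqi[OF sub1(1)] D_right integrable_subinterval_real[OF Di sub1(1)] in
        \<open>auto intro!: integrable_diff integrable_on_mult_right\<close>)
  have Dl: "integral {-L..0} (\<lambda>x. r0 / 2 * (u1 x)\<^sup>2 - 7 * p1 * (u2 x)\<^sup>2) \<le> integral {-L..0} Dd"
    by (rule integral_le_open)
      (use sqi[OF sub1(2)] D_left integrable_subinterval_real[OF Di sub1(2)] in
        \<open>auto intro!: integrable_diff integrable_on_mult_right\<close>)
  have e1: "integral {0..L} (\<lambda>x. r0 / 2 * (u2 x)\<^sup>2 - 7 * p1 * (u1 x)\<^sup>2) = r0 / 2 * J2 - 7 * p1 * I1"
    unfolding I1_def J2_def using sqi[OF sub1(1)]
    by (simp add: integral_diff integrable_on_mult_right)
  have e2: "integral {-L..0} (\<lambda>x. r0 / 2 * (u1 x)\<^sup>2 - 7 * p1 * (u2 x)\<^sup>2) = r0 / 2 * J1 - 7 * p1 * I2"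
    unfolding J1_def I2_def using sqi[OF sub1(2)]
    by (simp add: integral_diff integrable_on_mult_right)
  have DY: "integral {-L..0} Dd + integral {0..L} Dd = Y"
    using Henstock_Kurzweil_Integration.integral_combine[OF _ _ Di, of 0] L D_int by (simp add: integral_unique)
  have i1: "I1 \<le> c1 * Y" unfolding I1_def by (rule I1)
  have i2: "I2 \<le> c1 * Y" unfolding I2_def by (rule I2)
  have "r0 / 2 * (J1 + J2) \<le> Y + 7 * p1 * (I1 + I2)"
    using Dr Dl e1 e2 DY by (simp add: algebra_simps)
  also have "\<dots> \<le> Y + 7 * p1 * (2 * c1 * Y)"
    using i1 i2 p10 by (intro add_left_mono mult_left_mono) auto
  finally have "r0 * (J1 + J2) \<le> 2 * ((1 + 14 * p1 * c1) * Y)" by (simp add: algebra_simps)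
  hence JJ: "J1 + J2 \<le> 2 * (1 + 14 * p1 * c1) / r0 * Y" using r00 by (simp add: field_simps)
  have Sdec: "S = I1 + J1 + I2 + J2"
  proof -
    have a: "(\<lambda>x. (u1 x)\<^sup>2 + (u2 x)\<^sup>2) integrable_on {-L..L}"
      using sqi[of "-L" L] by (auto intro: integrable_add)
    have "S = integral {-L..0} (\<lambda>x. (u1 x)\<^sup>2 + (u2 x)\<^sup>2) + integral {0..L} (\<lambda>x. (u1 x)\<^sup>2 + (u2 x)\<^sup>2)"
      unfolding S_def using Henstock_Kurzweil_Integration.integral_combine[OF _ _ a, of 0] L by simp
    also have "\<dots> = I1 + J1 + I2 + J2"
      unfolding I1_def J1_def I2_def J2_def using sqi[OF sub1(1)] sqi[OF sub1(2)]
      by (simp add: integral_add)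
    finally show ?thesis .
  qed
  show ?thesis unfolding Sdec cS_def using JJ i1 i2 by (simp add: algebra_simps)
qed

lemma S_nn: "S \<ge> 0" unfolding S_def using sqi[of "-L" L]
  by (intro integral_nonneg) (auto intro: integrable_add)

lemma Y_le: "Y \<le> 4 * cS * L * F\<^sup>2"
proof -
  define e where "e = 1 / (2 * cS)"
  have e0: "e > 0" unfolding e_def using cSpos by simp
  have a: "(\<lambda>x. (u1 x)\<^sup>2 + (u2 x)\<^sup>2) integrable_on {-L..L}"
    using sqi[of "-L" L] by (auto intro: integrable_add)
  have "Y \<le> integral {-L..L} (\<lambda>x. e * ((u1 x)\<^sup>2 + (u2 x)\<^sup>2) + F\<^sup>2 / (2 * e))"
    unfolding Y_def
  proof (rule integral_le_open)
    show "uf integrable_on {-L..L}" using ufc by (rule integrable_continuous_real)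
    show "(\<lambda>x. e * ((u1 x)\<^sup>2 + (u2 x)\<^sup>2) + F\<^sup>2 / (2 * e)) integrable_on {-L..L}"
      by (rule integrable_add[OF integrable_on_mult_right[OF a] integrable_const_ivl])
    show "\<forall>x\<in>{-L<..<L}. uf x \<le> e * ((u1 x)\<^sup>2 + (u2 x)\<^sup>2) + F\<^sup>2 / (2 * e)"
    proof
      fix x assume "x \<in> {-L<..<L}"
      hence f: "\<bar>f1 x\<bar> \<le> F" "\<bar>f2 x\<bar> \<le> F" using fb by auto
      have "u1 x * f1 x \<le> e * (u1 x)\<^sup>2 + F\<^sup>2 / (4 * e)" by (rule amgm_F[OF e0 f(1)])
      moreover have "u2 x * f2 x \<le> e * (u2 x)\<^sup>2 + F\<^sup>2 / (4 * e)" by (rule amgm_F[OF e0 f(2)])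
      moreover have "F\<^sup>2 / (4 * e) + F\<^sup>2 / (4 * e) = F\<^sup>2 / (2 * e)" by (simp add: field_simps)
      ultimately show "uf x \<le> e * ((u1 x)\<^sup>2 + (u2 x)\<^sup>2) + F\<^sup>2 / (2 * e)"
        unfolding uf_def by (simp add: algebra_simps)
    qed
  qed
  also have "\<dots> = integral {-L..L} (\<lambda>x. e * ((u1 x)\<^sup>2 + (u2 x)\<^sup>2)) + integral {-L..L} (\<lambda>x. F\<^sup>2 / (2 * e))"
    by (rule integral_add[OF integrable_on_mult_right[OF a] integrable_const_ivl])
  also have "\<dots> = e * S + 2 * L * (F\<^sup>2 / (2 * e))"
    using L unfolding S_def by (simp add: content_real)
  also have "\<dots> = S / (2 * cS) + 2 * L * cS * F\<^sup>2" unfolding e_def using cSpos by (simp add: field_simps)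
  also have "\<dots> \<le> Y / 2 + 2 * L * cS * F\<^sup>2"
  proof -
    have "S / (2 * cS) \<le> cS * Y / (2 * cS)" using S_le cSpos by (intro divide_right_mono) auto
    also have "\<dots> = Y / 2" using cSpos by simp
    finally show ?thesis by simp
  qed
  finally show ?thesis by (simp add: algebra_simps)
qed

definition "J = integral {-L..L} (\<lambda>x. (u1' x)\<^sup>2 + (u2' x)\<^sup>2)"

lemma Jpart: "(\<lambda>x. (u1' x)\<^sup>2 + (u2' x)\<^sup>2) integrable_on {-L..L} \<and> J \<le> Y + Am * S"
proof -
  define Qf where "Qf x = P x * (u1 x)\<^sup>2 + R x * (u2 x)\<^sup>2 - 2 * K x * u1 x * u2 x" for x
  have Qc: "continuous_on {-L..L} Qf" unfolding Qf_def using cP cK cR cu1 cu2 by (intro continuous_intros)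
  have Qi: "Qf integrable_on {-L..L}" using Qc by (rule integrable_continuous_real)
  have eq: "(\<lambda>x. (u1' x)\<^sup>2 + (u2' x)\<^sup>2) = (\<lambda>x. Dd x - Qf x)" unfolding Dd_def Qf_def by (rule ext) simp
  have int: "(\<lambda>x. (u1' x)\<^sup>2 + (u2' x)\<^sup>2) integrable_on {-L..L}" unfolding eq using Di Qi by (rule integrable_diff)
  have a: "(\<lambda>x. (u1 x)\<^sup>2 + (u2 x)\<^sup>2) integrable_on {-L..L}"
    using sqi[of "-L" L] by (auto intro: integrable_add)
  have "J = Y - integral {-L..L} Qf" unfolding J_def eq using Di Qi D_int by (simp add: integral_diff integral_unique)
  also have "\<dots> \<le> Y + integral {-L..L} (\<lambda>x. Am * ((u1 x)\<^sup>2 + (u2 x)\<^sup>2))"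
  proof -
    have "integral {-L..L} (\<lambda>x. - Qf x) \<le> integral {-L..L} (\<lambda>x. Am * ((u1 x)\<^sup>2 + (u2 x)\<^sup>2))"
    proof (rule integral_le)
      show "(\<lambda>x. - Qf x) integrable_on {-L..L}" using Qi by (rule integrable_neg)
      show "(\<lambda>x. Am * ((u1 x)\<^sup>2 + (u2 x)\<^sup>2)) integrable_on {-L..L}" using a by (rule integrable_on_mult_right)
      fix x assume xx: "x \<in> {-L..L}"
      have c: "0 \<le> P x" "0 \<le> R x" "0 \<le> K x" "K x \<le> Am" using coef[OF xx] by auto
      have "2 * (u1 x * u2 x) \<le> (u1 x)\<^sup>2 + (u2 x)\<^sup>2"
        using sum_squares_ge_zero[of "u1 x - u2 x" 0] by (simp add: power2_eq_square algebra_simps)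
      hence "K x * (2 * (u1 x * u2 x)) \<le> K x * ((u1 x)\<^sup>2 + (u2 x)\<^sup>2)" using c by (intro mult_left_mono) auto
      also have "\<dots> \<le> Am * ((u1 x)\<^sup>2 + (u2 x)\<^sup>2)" using c by (intro mult_right_mono) auto
      finally have k: "K x * (2 * (u1 x * u2 x)) \<le> Am * ((u1 x)\<^sup>2 + (u2 x)\<^sup>2)" .
      have "0 \<le> P x * (u1 x)\<^sup>2" "0 \<le> R x * (u2 x)\<^sup>2" using c by auto
      thus "- Qf x \<le> Am * ((u1 x)\<^sup>2 + (u2 x)\<^sup>2)" using k unfolding Qf_def by (simp add: algebra_simps)
    qed
    thus ?thesis using Qi by (simp add: integral_neg)
  qed
  also have "\<dots> = Y + Am * S" unfolding S_def by simp
  finally show ?thesis using int by simp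
qed

lemma point_bound:
  assumes d: "d > 0" and x: "x \<in> {-L..L}"
  shows "(u1 x)\<^sup>2 \<le> d * S + J / d \<and> (u2 x)\<^sup>2 \<le> d * S + J / d"
proof -
  define G where "G t = d * ((u1 t)\<^sup>2 + (u2 t)\<^sup>2) + ((u1' t)\<^sup>2 + (u2' t)\<^sup>2) / d" for t
  have a: "(\<lambda>x. (u1 x)\<^sup>2 + (u2 x)\<^sup>2) integrable_on {-L..L}"
    using sqi[of "-L" L] by (auto intro: integrable_add)
  have Ji: "(\<lambda>x. (u1' x)\<^sup>2 + (u2' x)\<^sup>2) integrable_on {-L..L}" using Jpart by blast
  have Gi: "G integrable_on {-L..L}" unfolding G_def
    by (rule integrable_add[OF integrable_on_mult_right[OF a] integrable_on_divide[OF Ji]])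
  have "integral {-L..L} G = integral {-L..L} (\<lambda>x. d * ((u1 x)\<^sup>2 + (u2 x)\<^sup>2)) + integral {-L..L} (\<lambda>x. ((u1' x)\<^sup>2 + (u2' x)\<^sup>2) / d)"
    unfolding G_def by (rule integral_add[OF integrable_on_mult_right[OF a] integrable_on_divide[OF Ji]])
  hence GI: "integral {-L..L} G = d * S + J / d" unfolding S_def J_def by simp
  have Gnn: "G t \<ge> 0" for t unfolding G_def using d by simp
  have xl: "-L \<le> x" "x \<le> L" using x by auto
  have Gx: "integral {-L..x} G \<le> d * S + J / d"
  proof -
    have i2: "G integrable_on {x..L}" by (rule integrable_subinterval_real[OF Gi]) (use xl in auto)
    have "integral {-L..x} G + integral {x..L} G = integral {-L..L} G"
      using Henstock_Kurzweil_Integration.integral_combine[OF xl Gi] .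
    moreover have "integral {x..L} G \<ge> 0" using i2 Gnn by (intro integral_nonneg) auto
    ultimately show ?thesis using GI by linarith
  qed
  have Gi1: "G integrable_on {-L..x}" by (rule integrable_subinterval_real[OF Gi]) (use xl in auto)
  {
    fix u u' :: "real \<Rightarrow> real"
    assume cu: "continuous_on {-L..L} u" and ua: "u (-L) = 0"
      and du': "\<forall>t\<in>{-L<..<L}. (u has_real_derivative u' t) (at t)"
      and le: "\<forall>t. d * (u t)\<^sup>2 + (u' t)\<^sup>2 / d \<le> G t"
    have ftc: "((\<lambda>t. u' t * u t + u' t * u t) has_integral (u x * u x - u (-L) * u (-L))) {-L..x}"
    proof (rule fundamental_theorem_of_calculus_interior)
      show "-L \<le> x" by (rule xl)
      show "continuous_on {-L..x} (\<lambda>t. u t * u t)"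
        using continuous_on_subset[OF cu] xl by (auto intro!: continuous_intros)
      fix t assume "t \<in> {-L<..<x}"
      hence "t \<in> {-L<..<L}" using xl by auto
      hence "(u has_real_derivative u' t) (at t)" using du' by blast
      hence "((\<lambda>t. u t * u t) has_real_derivative (u' t * u t + u' t * u t)) (at t)"
        by (intro DERIV_mult)
      thus "((\<lambda>t. u t * u t) has_vector_derivative (u' t * u t + u' t * u t)) (at t)"
        by (simp add: has_real_derivative_iff_has_vector_derivative)
    qed
    have ieq: "integral {-L..x} (\<lambda>t. u' t * u t + u' t * u t) = u x * u x - u (-L) * u (-L)"
      by (rule integral_unique[OF ftc])
    have "u (-L) * u (-L) = 0" using ua by simp
    hence "u x * u x = integral {-L..x} (\<lambda>t. u' t * u t + u' t * u t)" using ieq by linarith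
    also have "\<dots> \<le> integral {-L..x} G"
    proof (rule integral_le_open)
      show "(\<lambda>t. u' t * u t + u' t * u t) integrable_on {-L..x}" using ftc by blast
      show "G integrable_on {-L..x}" by (rule Gi1)
      show "\<forall>t\<in>{-L<..<x}. u' t * u t + u' t * u t \<le> G t"
        using amgm_d[OF d] le by (meson order_trans)
    qed
    finally have "(u x)\<^sup>2 \<le> d * S + J / d" using Gx by (simp add: power2_eq_square)
  } note gen = this
  have le1: "\<forall>t. d * (u1 t)\<^sup>2 + (u1' t)\<^sup>2 / d \<le> G t"
  proof
    fix t
    have "d * (u2 t)\<^sup>2 \<ge> 0" "(u2' t)\<^sup>2 / d \<ge> 0" using d by auto
    thus "d * (u1 t)\<^sup>2 + (u1' t)\<^sup>2 / d \<le> G t" unfolding G_def by (simp add: algebra_simps add_divide_distrib)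
  qed
  have le2: "\<forall>t. d * (u2 t)\<^sup>2 + (u2' t)\<^sup>2 / d \<le> G t"
  proof
    fix t
    have "d * (u1 t)\<^sup>2 \<ge> 0" "(u1' t)\<^sup>2 / d \<ge> 0" using d by auto
    thus "d * (u2 t)\<^sup>2 + (u2' t)\<^sup>2 / d \<le> G t" unfolding G_def by (simp add: algebra_simps add_divide_distrib)
  qed
  show ?thesis
    using gen[OF cu1 bc(1) _ le1] gen[OF cu2 bc(3) _ le2] du by auto
qed

theorem energy_main:
  assumes d: "d > 0" and x: "x \<in> {-L..L}"
  shows "(u1 x)\<^sup>2 \<le> d * (cS * (4 * cS * L * F\<^sup>2)) + (4 * cS * L * F\<^sup>2 + Am * (cS * (4 * cS * L * F\<^sup>2))) / d
       \<and> (u2 x)\<^sup>2 \<le> d * (cS * (4 * cS * L * F\<^sup>2)) + (4 * cS * L * F\<^sup>2 + Am * (cS * (4 * cS * L * F\<^sup>2))) / d"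
proof -
  have Sb: "S \<le> cS * (4 * cS * L * F\<^sup>2)" using S_le Y_le cSpos by (smt (verit) mult_left_mono)
  have Jb: "J \<le> 4 * cS * L * F\<^sup>2 + Am * (cS * (4 * cS * L * F\<^sup>2))"
    using Jpart Y_le Sb Am0 by (smt (verit) mult_left_mono)
  have "d * S + J / d \<le> d * (cS * (4 * cS * L * F\<^sup>2)) + (4 * cS * L * F\<^sup>2 + Am * (cS * (4 * cS * L * F\<^sup>2))) / d"
    using Sb Jb d by (intro add_mono mult_left_mono divide_right_mono) auto
  thus ?thesis using point_bound[OF d x] by linarith
qed

end


lemma odesol_comb:
  assumes "odesol a b P K R f1 f2 u1 u2 v1 v2" "odesol a b P K R g1 g2 w1 w2 z1 z2"
  shows "odesol a b P K R (\<lambda>x. p * f1 x + q * g1 x) (\<lambda>x. p * f2 x + q * g2 x)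
     (\<lambda>x. p * u1 x + q * w1 x) (\<lambda>x. p * u2 x + q * w2 x) (\<lambda>x. p * v1 x + q * z1 x) (\<lambda>x. p * v2 x + q * z2 x)"
  unfolding odesol_def
proof (intro conjI ballI)
  show "continuous_on {a..b} (\<lambda>x. p * u1 x + q * w1 x)" "continuous_on {a..b} (\<lambda>x. p * u2 x + q * w2 x)"
    using assms unfolding odesol_def by (auto intro!: continuous_intros)
  fix x assume x: "x \<in> {a<..<b}"
  have A: "(u1 has_real_derivative v1 x) (at x)" "(u2 has_real_derivative v2 x) (at x)"
        "(v1 has_real_derivative (P x * u1 x - K x * u2 x - f1 x)) (at x)"
        "(v2 has_real_derivative (R x * u2 x - K x * u1 x - f2 x)) (at x)"
    using assms(1) x unfolding odesol_def by auto
  have B: "(w1 has_real_derivative z1 x) (at x)" "(w2 has_real_derivative z2 x) (at x)"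
        "(z1 has_real_derivative (P x * w1 x - K x * w2 x - g1 x)) (at x)"
        "(z2 has_real_derivative (R x * w2 x - K x * w1 x - g2 x)) (at x)"
    using assms(2) x unfolding odesol_def by auto
  show "((\<lambda>x. p * u1 x + q * w1 x) has_real_derivative p * v1 x + q * z1 x) (at x)"
    using A(1) B(1) by (auto intro!: derivative_eq_intros)
  show "((\<lambda>x. p * u2 x + q * w2 x) has_real_derivative p * v2 x + q * z2 x) (at x)"
    using A(2) B(2) by (auto intro!: derivative_eq_intros)
  have "((\<lambda>x. p * v1 x + q * z1 x) has_real_derivative p * (P x * u1 x - K x * u2 x - f1 x) + q * (P x * w1 x - K x * w2 x - g1 x)) (at x)"
    using A(3) B(3) by (auto intro!: derivative_eq_intros)
  thus "((\<lambda>x. p * v1 x + q * z1 x) has_real_derivative P x * (p * u1 x + q * w1 x) - K x * (p * u2 x + q * w2 x) - (p * f1 x + q * g1 x)) (at x)"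
    by (simp add: algebra_simps)
  have "((\<lambda>x. p * v2 x + q * z2 x) has_real_derivative p * (R x * u2 x - K x * u1 x - f2 x) + q * (R x * w2 x - K x * w1 x - g2 x)) (at x)"
    using A(4) B(4) by (auto intro!: derivative_eq_intros)
  thus "((\<lambda>x. p * v2 x + q * z2 x) has_real_derivative R x * (p * u2 x + q * w2 x) - K x * (p * u1 x + q * w1 x) - (p * f2 x + q * g2 x)) (at x)"
    by (simp add: algebra_simps)
qed

context esys
begin

lemma uniq0:
  assumes sol: "odesol (-L) L P K R (\<lambda>x. 0) (\<lambda>x. 0) w1 w2 w1' w2'"
    and bc: "w1 (-L) = 0" "w1 L = 0" "w2 (-L) = 0" "w2 L = 0"
    and x: "x \<in> {-L..L}"
  shows "w1 x = 0 \<and> w2 x = 0"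
proof -
  interpret E: esol L P K R g1 g2 g1' g2' m B r0 p1 Am "\<lambda>x. 0" "\<lambda>x. 0" w1 w2 w1' w2' 0
    by unfold_locales (use sol bc in auto)
  have "(w1 x)\<^sup>2 \<le> 0 \<and> (w2 x)\<^sup>2 \<le> 0" using E.energy_main[of 1 x] x by simp
  thus ?thesis by simp
qed

lemma bvp_exist:
  assumes cf1: "continuous_on {-L..L} f1" and cf2: "continuous_on {-L..L} f2"
  shows "\<exists>u1 u2 v1 v2. odesol (-L) L P K R f1 f2 u1 u2 v1 v2 \<and>
            u1 (-L) = 0 \<and> u1 L = 0 \<and> u2 (-L) = 0 \<and> u2 L = 0"
proof -
  have LL: "-L < L" using L by simp
  have cc: "continuous_on {-L..L} P" "continuous_on {-L..L} K" "continuous_on {-L..L} R" using cP cK cR .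
  have c0: "continuous_on {-L..L} (\<lambda>x::real. 0::real)" by simp
  obtain U1 U2 V1 V2 where U: "odesol (-L) L P K R f1 f2 U1 U2 V1 V2" "U1 (-L) = 0" "U2 (-L) = 0"
    using sys_ivp[OF LL cc cf1 cf2, of 0 0] by blast
  obtain a1 a2 b1 b2 where Y1: "odesol (-L) L P K R (\<lambda>x. 0) (\<lambda>x. 0) a1 a2 b1 b2" "a1 (-L) = 0" "a2 (-L) = 0"
     "continuous_on {-L..L} b1" "continuous_on {-L..L} b2" "b1 (-L) = 1" "b2 (-L) = 0"
    using sys_ivp[OF LL cc c0 c0, of 1 0] by blast
  obtain c1' c2 e1 e2 where Y2: "odesol (-L) L P K R (\<lambda>x. 0) (\<lambda>x. 0) c1' c2 e1 e2" "c1' (-L) = 0" "c2 (-L) = 0"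
     "continuous_on {-L..L} e1" "continuous_on {-L..L} e2" "e1 (-L) = 0" "e2 (-L) = 1"
    using sys_ivp[OF LL cc c0 c0, of 0 1] by blast
  define dt where "dt = a1 L * c2 L - c1' L * a2 L"
  have dt0: "dt \<noteq> 0"
  proof
    assume dt0: "dt = 0"
    obtain k1 k2 where k: "(k1, k2) \<noteq> (0, 0)" "k1 * a1 L + k2 * c1' L = 0" "k1 * a2 L + k2 * c2 L = 0"
    proof -
      consider "(c2 L, - a2 L) \<noteq> (0,0)" | "c2 L = 0 \<and> a2 L = 0 \<and> (c1' L, - a1 L) \<noteq> (0,0)"
        | "c2 L = 0 \<and> a2 L = 0 \<and> c1' L = 0 \<and> a1 L = 0" by fastforce
      thus ?thesis
      proof cases
        case 1 thus ?thesis using that[of "c2 L" "- a2 L"] dt0 unfolding dt_def by (simp add: algebra_simps)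
      next
        case 2 thus ?thesis using that[of "c1' L" "- a1 L"] by (simp add: algebra_simps)
      next
        case 3 thus ?thesis using that[of 1 0] by simp
      qed
    qed
    define w1 where "w1 x = k1 * a1 x + k2 * c1' x" for x
    define w2 where "w2 x = k1 * a2 x + k2 * c2 x" for x
    define z1 where "z1 x = k1 * b1 x + k2 * e1 x" for x
    define z2 where "z2 x = k1 * b2 x + k2 * e2 x" for x
    have W: "odesol (-L) L P K R (\<lambda>x. 0) (\<lambda>x. 0) w1 w2 z1 z2"
      using odesol_comb[OF Y1(1) Y2(1), of k1 k2] unfolding w1_def w2_def z1_def z2_def by simp
    have Wz: "w1 x = 0 \<and> w2 x = 0" if "x \<in> {-L..L}" for x
      by (rule uniq0[OF W _ _ _ _ that]) (use Y1 Y2 k in \<open>auto simp: w1_def w2_def\<close>)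
    have zz: "z1 x = 0 \<and> z2 x = 0" if x: "x \<in> {-L<..<L}" for x
    proof -
      have d: "(w1 has_real_derivative z1 x) (at x)" "(w2 has_real_derivative z2 x) (at x)"
        using W x unfolding odesol_def by auto
      have "((\<lambda>x. 0) has_real_derivative z1 x) (at x)"
        by (rule has_field_derivative_transform_within_open[OF d(1), of "{-L<..<L}"]) (use x Wz in auto)
      moreover have "((\<lambda>x. 0) has_real_derivative z2 x) (at x)"
        by (rule has_field_derivative_transform_within_open[OF d(2), of "{-L<..<L}"]) (use x Wz in auto)
      ultimately show ?thesis using DERIV_const DERIV_unique by blast
    qed
    have cz: "continuous_on (closure {-L<..<L}) z1" "continuous_on (closure {-L<..<L}) z2"
      using LL Y1 Y2 unfolding z1_def z2_def by (auto intro!: continuous_intros)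
    have mem: "-L \<in> closure {-L<..<L}" using LL by simp
    have "z1 (-L) = 0" by (rule continuous_constant_on_closure[OF cz(1) _ mem]) (use zz in auto)
    moreover have "z2 (-L) = 0" by (rule continuous_constant_on_closure[OF cz(2) _ mem]) (use zz in auto)
    ultimately have "k1 = 0" "k2 = 0" using Y1 Y2 unfolding z1_def z2_def by auto
    thus False using k by simp
  qed
  define d1 where "d1 = - (c2 L * U1 L - c1' L * U2 L) / dt"
  define d2 where "d2 = - (a1 L * U2 L - a2 L * U1 L) / dt"
  have S1: "odesol (-L) L P K R (\<lambda>x. 1 * f1 x + d1 * 0) (\<lambda>x. 1 * f2 x + d1 * 0)
      (\<lambda>x. 1 * U1 x + d1 * a1 x) (\<lambda>x. 1 * U2 x + d1 * a2 x) (\<lambda>x. 1 * V1 x + d1 * b1 x) (\<lambda>x. 1 * V2 x + d1 * b2 x)"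
    by (rule odesol_comb[OF U(1) Y1(1)])
  hence S1': "odesol (-L) L P K R f1 f2 (\<lambda>x. U1 x + d1 * a1 x) (\<lambda>x. U2 x + d1 * a2 x) (\<lambda>x. V1 x + d1 * b1 x) (\<lambda>x. V2 x + d1 * b2 x)"
    by simp
  have S2: "odesol (-L) L P K R (\<lambda>x. 1 * f1 x + d2 * 0) (\<lambda>x. 1 * f2 x + d2 * 0)
      (\<lambda>x. 1 * (U1 x + d1 * a1 x) + d2 * c1' x) (\<lambda>x. 1 * (U2 x + d1 * a2 x) + d2 * c2 x)
      (\<lambda>x. 1 * (V1 x + d1 * b1 x) + d2 * e1 x) (\<lambda>x. 1 * (V2 x + d1 * b2 x) + d2 * e2 x)"
    by (rule odesol_comb[OF S1' Y2(1)])
  hence S2': "odesol (-L) L P K R f1 f2 (\<lambda>x. U1 x + d1 * a1 x + d2 * c1' x) (\<lambda>x. U2 x + d1 * a2 x + d2 * c2 x)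
      (\<lambda>x. V1 x + d1 * b1 x + d2 * e1 x) (\<lambda>x. V2 x + d1 * b2 x + d2 * e2 x)"
    by simp
  have e1: "U1 L + d1 * a1 L + d2 * c1' L = 0"
    unfolding d1_def d2_def using dt0 unfolding dt_def by (simp add: field_simps; simp add: algebra_simps)
  have e2: "U2 L + d1 * a2 L + d2 * c2 L = 0"
    unfolding d1_def d2_def using dt0 unfolding dt_def by (simp add: field_simps; simp add: algebra_simps)
  show ?thesis
    apply (rule exI[of _ "\<lambda>x. U1 x + d1 * a1 x + d2 * c1' x"], rule exI[of _ "\<lambda>x. U2 x + d1 * a2 x + d2 * c2 x"])
    apply (rule exI[of _ "\<lambda>x. V1 x + d1 * b1 x + d2 * e1 x"], rule exI[of _ "\<lambda>x. V2 x + d1 * b2 x + d2 * e2 x"])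
    using S2' e1 e2 U Y1 Y2 by simp
qed

end


locale vpair =
  fixes V1 V2 :: "real \<Rightarrow> real"
  assumes VP: "is_V_pair V1 V2"
begin

lemma pos1: "V1 x > 0" and pos2: "V2 x > 0"
  using VP unfolding is_V_pair_def by auto

lemma sym: "V1 (-x) = V2 x"
  using VP unfolding is_V_pair_def by auto

lemma sym2: "V2 (-x) = V1 x"
  using sym[of "-x"] by simp

lemma d1: "(V1 has_real_derivative deriv V1 x) (at x)"
  using VP unfolding is_V_pair_def by (auto simp: DERIV_deriv_iff_real_differentiable)

lemma d2: "(V2 has_real_derivative deriv V2 x) (at x)"
  using VP unfolding is_V_pair_def by (auto simp: DERIV_deriv_iff_real_differentiable)

lemma dd1: "(deriv V1 has_real_derivative (V2 x)\<^sup>2 * V1 x) (at x)"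
proof -
  have "deriv V1 differentiable at x"
    using VP unfolding is_V_pair_def by blast
  hence "(deriv V1 has_real_derivative deriv (deriv V1) x) (at x)"
    by (simp add: DERIV_deriv_iff_real_differentiable)
  moreover have "deriv (deriv V1) x = (V2 x)\<^sup>2 * V1 x"
    using VP unfolding is_V_pair_def by auto
  ultimately show ?thesis by simp
qed

lemma dd2: "(deriv V2 has_real_derivative (V1 x)\<^sup>2 * V2 x) (at x)"
proof -
  have "deriv V2 differentiable at x"
    using VP unfolding is_V_pair_def by blast
  hence "(deriv V2 has_real_derivative deriv (deriv V2) x) (at x)"
    by (simp add: DERIV_deriv_iff_real_differentiable)
  moreover have "deriv (deriv V2) x = (V1 x)\<^sup>2 * V2 x"
    using VP unfolding is_V_pair_def by auto
  ultimately show ?thesis by simp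
qed

lemma lim1: "((\<lambda>x. V1 x / x) \<longlongrightarrow> 1 / sqrt 2) at_top"
  using VP unfolding is_V_pair_def by auto

lemma lim2: "(V2 \<longlongrightarrow> 0) at_top"
  using VP unfolding is_V_pair_def by auto

lemma cont1: "continuous_on S V1"
  using DERIV_isCont[OF d1] by (simp add: continuous_at_imp_continuous_on)
lemma cont2: "continuous_on S V2"
  using DERIV_isCont[OF d2] by (simp add: continuous_at_imp_continuous_on)
lemma contd1: "continuous_on S (deriv V1)"
  using DERIV_isCont[OF dd1] by (simp add: continuous_at_imp_continuous_on)
lemma contd2: "continuous_on S (deriv V2)"
  using DERIV_isCont[OF dd2] by (simp add: continuous_at_imp_continuous_on)

lemma ddpos: "(V2 x)\<^sup>2 * V1 x > 0"
  using pos1[of x] pos2[of x] by simp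

lemma d1_strict_mono: "a < b \<Longrightarrow> deriv V1 a < deriv V1 b"
proof -
  assume "a < b"
  have "\<And>x. \<exists>y. DERIV (deriv V1) x :> y \<and> y > 0" using dd1 ddpos by blast
  then show ?thesis using DERIV_pos_imp_increasing[of a b "deriv V1"] \<open>a < b\<close> by blast
qed

lemma d1_pos: "deriv V1 x > 0"
proof (rule ccontr)
  assume "\<not> deriv V1 x > 0"
  define x1 where "x1 = x - 1"
  define d where "d = - deriv V1 x1"
  have "deriv V1 x1 < deriv V1 x" using d1_strict_mono x1_def by auto
  hence dpos: "d > 0" using \<open>\<not> deriv V1 x > 0\<close> d_def by auto
  have grow: "V1 y \<ge> d * (x1 - y)" if "y < x1" for y
  proof -
    obtain z where z: "y < z" "z < x1" "V1 x1 - V1 y = (x1 - y) * deriv V1 z"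
      using MVT2[of y x1 V1 "deriv V1"] d1 \<open>y < x1\<close> by blast
    have "deriv V1 z < deriv V1 x1" using d1_strict_mono z by auto
    hence "deriv V1 z \<le> - d" using d_def by linarith
    hence "(x1 - y) * deriv V1 z \<le> (x1 - y) * (- d)" using \<open>y < x1\<close> by (intro mult_left_mono) linarith+
    hence "V1 x1 - V1 y \<le> (x1 - y) * (- d)" using z(3) by linarith
    thus ?thesis using pos1[of x1] by (simp add: algebra_simps)
  qed
  have "\<forall>\<^sub>F t in at_top. V2 t < 1" using lim2 by (simp add: order_tendstoD(2))
  then obtain N where N: "\<And>t. t \<ge> N \<Longrightarrow> V2 t < 1" by (auto simp: eventually_at_top_linorder)
  define y where "y = min (x1 - 1 - 1/d) (- \<bar>N\<bar>)"
  have y1: "y \<le> x1 - 1 - 1/d" unfolding y_def by (rule min.cobounded1)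
  have y2: "y \<le> - \<bar>N\<bar>" unfolding y_def by (rule min.cobounded2)
  have "1/d > 0" using dpos by simp
  hence "y < x1" using y1 by linarith
  hence "V1 y \<ge> d * (x1 - y)" by (rule grow)
  moreover have "d * (x1 - y) \<ge> d * (1 + 1/d)"
    using dpos y1 by (intro mult_left_mono) linarith+
  moreover have "d * (1 + 1/d) > 1" using dpos by (simp add: field_simps)
  moreover have "V1 y = V2 (-y)" using sym[of "-y"] by simp
  moreover have "V2 (-y) < 1" using N[of "-y"] y2 by linarith
  ultimately show False by linarith
qed

lemma d2_eq: "deriv V2 x = - deriv V1 (-x)"
proof -
  have "((\<lambda>x. V1 (-x)) has_real_derivative deriv V1 (-x) * (-1)) (at x)"
    using DERIV_chain2[OF d1[of "-x"] DERIV_minus[OF DERIV_ident]] by simp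
  moreover have "(\<lambda>x. V1 (-x)) = V2" using sym by auto
  ultimately have "(V2 has_real_derivative - deriv V1 (-x)) (at x)" by simp
  thus ?thesis using DERIV_unique[OF d2] by blast
qed

lemma d2_neg: "deriv V2 x < 0"
  using d2_eq d1_pos by simp

lemma d1_le1: "deriv V1 x \<le> 1"
proof (rule ccontr)
  assume "\<not> deriv V1 x \<le> 1"
  define c where "c = deriv V1 x"
  have c1: "c > 1" using \<open>\<not> deriv V1 x \<le> 1\<close> c_def by auto
  have lower: "V1 y \<ge> V1 x + c * (y - x)" if "y > x" for y
  proof -
    obtain z where z: "x < z" "z < y" "V1 y - V1 x = (y - x) * deriv V1 z"
      using MVT2[of x y V1 "deriv V1"] d1 \<open>y > x\<close> by blast
    have "deriv V1 z > c" using d1_strict_mono z c_def by auto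
    hence "(y - x) * c \<le> (y - x) * deriv V1 z" using z by (intro mult_left_mono) auto
    thus ?thesis using z by (simp add: algebra_simps)
  qed
  have "1 / sqrt 2 < (1::real)" by (simp add: divide_less_eq)
  hence "\<forall>\<^sub>F y in at_top. V1 y / y < 1" using lim1 by (simp add: order_tendstoD(2))
  then obtain N where N: "\<And>y. y \<ge> N \<Longrightarrow> V1 y / y < 1" by (auto simp: eventually_at_top_linorder)
  define y where "y = max (max N (\<bar>x\<bar> + 1)) (\<bar>c * x\<bar> / (c - 1) + 1)"
  have yge: "y \<ge> \<bar>x\<bar> + 1" "y \<ge> N" "y \<ge> \<bar>c * x\<bar> / (c - 1) + 1"
    unfolding y_def by (meson max.cobounded1 max.cobounded2 order_trans)+
  have yx: "y > x" "y > 0" using yge(1) by linarith+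
  have "V1 y / y < 1" using N yge(2) by blast
  hence "V1 y < y" using yx by (simp add: divide_less_eq)
  moreover have "V1 y \<ge> V1 x + c * (y - x)" using lower yx by auto
  moreover have "(c - 1) * y > c * x"
  proof -
    have "y \<ge> \<bar>c * x\<bar> / (c - 1) + 1" using yge(3) .
    moreover have "c - 1 \<ge> 0" using c1 by linarith
    ultimately have "(c - 1) * y \<ge> (c - 1) * (\<bar>c * x\<bar> / (c - 1) + 1)" by (rule mult_left_mono)
    moreover have "c - 1 \<noteq> 0" using c1 by linarith
    hence "(c - 1) * (\<bar>c * x\<bar> / (c - 1) + 1) = \<bar>c * x\<bar> + (c - 1)" by (simp add: distrib_left)
    moreover have "\<bar>c * x\<bar> \<ge> c * x" by simp
    ultimately show ?thesis using c1 by linarith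
  qed
  moreover have "c*(y-x) = c*y - c*x" "(c-1)*y = c*y - y" by (simp_all add: algebra_simps)
  ultimately show False using pos1[of x] by linarith
qed

lemma V1_mono: "a \<le> b \<Longrightarrow> V1 a \<le> V1 b"
proof -
  assume "a \<le> b"
  have "\<And>x. \<exists>y. DERIV V1 x :> y \<and> y \<ge> 0" using d1 d1_pos less_imp_le by blast
  then show ?thesis using DERIV_nonneg_imp_nondecreasing[of a b V1] \<open>a \<le> b\<close> by blast
qed

lemma V2_anti: "a \<le> b \<Longrightarrow> V2 b \<le> V2 a"
proof -
  assume "a \<le> b"
  hence "V1 (-b) \<le> V1 (-a)" by (intro V1_mono) simp
  thus ?thesis using sym[of a] sym[of b] by simp
qed

lemma V1_lin: "x \<ge> 0 \<Longrightarrow> V1 x \<le> V1 0 + x"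
proof -
  assume "x \<ge> 0"
  show ?thesis
  proof (cases "x = 0")
    case False
    then obtain z where z: "0 < z" "z < x" "V1 x - V1 0 = (x - 0) * deriv V1 z"
      using MVT2[of 0 x V1 "deriv V1"] d1 \<open>x \<ge> 0\<close> by force
    have "x * deriv V1 z \<le> x" using d1_le1[of z] \<open>x \<ge> 0\<close> by (rule mult_left_le)
    moreover have "V1 x - V1 0 = x * deriv V1 z" using z(3) by simp
    ultimately show ?thesis by linarith
  qed simp
qed

lemma V1_bound: "V1 x \<le> V1 0 + \<bar>x\<bar>"
proof (cases "x \<ge> 0")
  case True thus ?thesis using V1_lin by simp
next
  case False
  hence "V1 x \<le> V1 0" using V1_mono by simp
  thus ?thesis by simp
qed

lemma V2_bound: "V2 x \<le> V1 0 + \<bar>x\<bar>"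
  using V1_bound[of "-x"] sym by simp

end


lemma deriv2_open:
  fixes f f' :: "real \<Rightarrow> real"
  assumes S: "open S" "z \<in> S" and d: "\<forall>y\<in>S. (f has_real_derivative f' y) (at y)"
    and dd: "(f' has_real_derivative f'' z) (at z)"
  shows "f differentiable at z \<and> deriv f z = f' z \<and> deriv f differentiable at z \<and> deriv (deriv f) z = f'' z"
proof -
  have eq: "\<forall>y\<in>S. deriv f y = f' y" using d DERIV_imp_deriv by blast
  have d2: "(deriv f has_real_derivative f'' z) (at z)"
    by (rule has_field_derivative_transform_within_open[OF dd S]) (use eq in auto)
  show ?thesis using d S eq d2 DERIV_imp_deriv real_differentiable_def by blast
qed

locale fixLam = vpair +
  fixes Lam :: real
  assumes Lam: "Lam \<ge> exp 2"
begin

definition "s = Lam powr (1/4)"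
definition "T = ln Lam"
definition "L = halfwidth Lam"
definition "PP z = sqrt Lam * (V2 (s * z))\<^sup>2" for z
definition "RR z = sqrt Lam * (V1 (s * z))\<^sup>2" for z
definition "KK z = 2 * sqrt Lam * V1 (s * z) * V2 (s * z)" for z
definition "G1 z = deriv V1 (s * z)" for z
definition "G2 z = - deriv V2 (s * z)" for z
definition "G1' z = s * ((V2 (s * z))\<^sup>2 * V1 (s * z))" for z
definition "G2' z = - (s * ((V1 (s * z))\<^sup>2 * V2 (s * z)))" for z
definition "v0 = V1 0"
definition "mm = deriv V1 0"
definition "r0 = sqrt Lam * v0\<^sup>2"
definition "Am = 2 * sqrt Lam * (v0 + T)\<^sup>2"

lemma Lam_pos: "Lam > 0" "Lam \<ge> 1"
proof -
  have "exp (2::real) \<ge> 1" by simp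
  thus "Lam \<ge> 1" using Lam by linarith
  thus "Lam > 0" by simp
qed

lemma T2: "T \<ge> 2"
proof -
  have "ln (exp 2) \<le> ln Lam" using Lam Lam_pos by (subst ln_le_cancel_iff) auto
  thus ?thesis unfolding T_def by simp
qed

lemma s_pos: "s > 0" unfolding s_def using Lam_pos by simp
lemma s_ge1: "s \<ge> 1" unfolding s_def using Lam_pos by (simp add: ge_one_powr_ge_zero)
lemma ss: "s * s = sqrt Lam"
proof -
  have "s * s = Lam powr (1/4 + 1/4)" unfolding s_def by (simp only: powr_add)
  also have "\<dots> = sqrt Lam" using Lam_pos by (simp add: powr_half_sqrt)
  finally show ?thesis .
qed
lemma sqL: "sqrt Lam * sqrt Lam = Lam" using Lam_pos by simp
lemma sinv: "Lam powr (-1/4) = 1 / s" unfolding s_def using Lam_pos by (simp add: powr_minus_divide)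

lemma L_eq: "L = T / s" unfolding L_def halfwidth_def T_def using sinv by simp
lemma L_pos: "L > 0" using L_eq T2 s_pos by simp
lemma sL: "s * L = T" using L_eq s_pos by simp

lemma v0_pos: "v0 > 0" unfolding v0_def by (rule pos1)
lemma mm_pos: "mm > 0" unfolding mm_def by (rule d1_pos)
lemma V20: "V2 0 = v0" unfolding v0_def using sym[of 0] by simp

lemma cV1: "continuous_on S (\<lambda>z. V1 (s * z))"
  by (rule continuous_on_compose2[OF cont1[of UNIV]]) (auto intro: continuous_intros)
lemma cV2: "continuous_on S (\<lambda>z. V2 (s * z))"
  by (rule continuous_on_compose2[OF cont2[of UNIV]]) (auto intro: continuous_intros)

lemma dV1: "((\<lambda>z. V1 (s * z)) has_real_derivative deriv V1 (s * z) * s) (at z)"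
  using DERIV_chain2[OF d1[of "s * z"] DERIV_cmult[OF DERIV_ident, of s]] by simp
lemma dV2: "((\<lambda>z. V2 (s * z)) has_real_derivative deriv V2 (s * z) * s) (at z)"
  using DERIV_chain2[OF d2[of "s * z"] DERIV_cmult[OF DERIV_ident, of s]] by simp
lemma ddV1: "((\<lambda>z. deriv V1 (s * z)) has_real_derivative (V2 (s * z))\<^sup>2 * V1 (s * z) * s) (at z)"
  using DERIV_chain2[OF dd1[of "s * z"] DERIV_cmult[OF DERIV_ident, of s]] by simp
lemma ddV2: "((\<lambda>z. deriv V2 (s * z)) has_real_derivative (V1 (s * z))\<^sup>2 * V2 (s * z) * s) (at z)"
  using DERIV_chain2[OF dd2[of "s * z"] DERIV_cmult[OF DERIV_ident, of s]] by simp

lemma absz: "z \<in> {-L..L} \<Longrightarrow> \<bar>s * z\<bar> \<le> T"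
proof -
  assume "z \<in> {-L..L}"
  hence "\<bar>z\<bar> \<le> L" by auto
  hence "s * \<bar>z\<bar> \<le> s * L" using s_pos by (intro mult_left_mono) auto
  thus ?thesis using sL s_pos by (simp add: abs_mult)
qed

lemma d1_mono: "a \<le> b \<Longrightarrow> deriv V1 a \<le> deriv V1 b"
  using d1_strict_mono by (cases "a = b") (auto simp: less_eq_real_def)

lemma esys_inst: "esys L PP KK RR G1 G2 G1' G2' mm 1 r0 r0 Am"
proof (unfold_locales)
  show "L > 0" by (rule L_pos)
  show "continuous_on {-L..L} PP" unfolding PP_def using cV2 by (intro continuous_intros)
  show "continuous_on {-L..L} KK" unfolding KK_def using cV1 cV2 by (intro continuous_intros)
  show "continuous_on {-L..L} RR" unfolding RR_def using cV1 by (intro continuous_intros)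
  fix x
  show "(G1 has_real_derivative G1' x) (at x)"
    unfolding G1_def G1'_def using ddV1[of x] by (simp add: mult.commute)
  show "(G2 has_real_derivative G2' x) (at x)"
    unfolding G2_def G2'_def using DERIV_minus[OF ddV2[of x]] by (simp add: mult.commute)
  have "(G1' has_real_derivative s * ((2 * V2 (s * x) * (deriv V2 (s * x) * s)) * V1 (s * x)
          + (V2 (s * x))\<^sup>2 * (deriv V1 (s * x) * s))) (at x)"
    unfolding G1'_def by (auto intro!: derivative_eq_intros dV1 dV2)
  moreover have "s * ((2 * V2 (s * x) * (deriv V2 (s * x) * s)) * V1 (s * x) + (V2 (s * x))\<^sup>2 * (deriv V1 (s * x) * s))
      = PP x * G1 x - KK x * G2 x"
    unfolding PP_def KK_def G1_def G2_def ss[symmetric] by (simp add: algebra_simps power2_eq_square)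
  ultimately show "(G1' has_real_derivative PP x * G1 x - KK x * G2 x) (at x)" by simp
  have "(G2' has_real_derivative - (s * ((2 * V1 (s * x) * (deriv V1 (s * x) * s)) * V2 (s * x)
          + (V1 (s * x))\<^sup>2 * (deriv V2 (s * x) * s)))) (at x)"
    unfolding G2'_def by (auto intro!: derivative_eq_intros dV1 dV2)
  moreover have "- (s * ((2 * V1 (s * x) * (deriv V1 (s * x) * s)) * V2 (s * x) + (V1 (s * x))\<^sup>2 * (deriv V2 (s * x) * s)))
      = RR x * G2 x - KK x * G1 x"
    unfolding RR_def KK_def G1_def G2_def ss[symmetric] by (simp add: algebra_simps power2_eq_square)
  ultimately show "(G2' has_real_derivative RR x * G2 x - KK x * G1 x) (at x)" by simp
next
  fix x assume x: "x \<in> {-L..L}"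
  show "G1 x > 0 \<and> G2 x > 0" unfolding G1_def G2_def using d1_pos d2_neg by simp
  have sq: "sqrt Lam \<ge> 0" using Lam_pos by simp
  have b1: "V1 (s * x) \<le> v0 + T" using V1_bound[of "s * x"] absz[OF x] unfolding v0_def by linarith
  have b2: "V2 (s * x) \<le> v0 + T" using V2_bound[of "s * x"] absz[OF x] unfolding v0_def by linarith
  have p1: "V1 (s * x) > 0" "V2 (s * x) > 0" using pos1 pos2 by auto
  have q1: "(V1 (s * x))\<^sup>2 \<le> (v0 + T)\<^sup>2" "(V2 (s * x))\<^sup>2 \<le> (v0 + T)\<^sup>2"
    using b1 b2 p1 by (auto intro: power_mono)
  have q2: "V1 (s * x) * V2 (s * x) \<le> (v0 + T)\<^sup>2"
    using b1 b2 p1 by (simp add: power2_eq_square mult_mono)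
  have "(v0 + T)\<^sup>2 \<ge> 0" by simp
  hence "sqrt Lam * (v0 + T)\<^sup>2 \<le> Am" unfolding Am_def using sq by (simp add: mult_left_mono)
  moreover have "PP x \<le> sqrt Lam * (v0 + T)\<^sup>2" unfolding PP_def using q1 sq by (intro mult_left_mono) auto
  moreover have "RR x \<le> sqrt Lam * (v0 + T)\<^sup>2" unfolding RR_def using q1 sq by (intro mult_left_mono) auto
  moreover have "KK x \<le> Am" unfolding KK_def Am_def using q2 sq
    by (simp add: mult.assoc mult_left_mono)
  moreover have "(KK x)\<^sup>2 = 4 * PP x * RR x"
    unfolding KK_def PP_def RR_def using Lam_pos by (simp add: power2_eq_square algebra_simps)
  moreover have "0 \<le> PP x" "0 \<le> RR x" "0 \<le> KK x" unfolding PP_def RR_def KK_def using p1 sq by auto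
  ultimately show "0 \<le> PP x \<and> 0 \<le> RR x \<and> 0 \<le> KK x \<and> (KK x)\<^sup>2 \<le> 4 * PP x * RR x \<and> PP x \<le> Am \<and> RR x \<le> Am \<and> KK x \<le> Am"
    by linarith
next
  fix x assume x: "x \<in> {0..L}"
  have sx: "s * x \<ge> 0" using x s_pos by simp
  have a: "V1 (s * x) \<ge> v0" unfolding v0_def using V1_mono[OF sx] .
  have b: "V2 (s * x) \<le> v0" using V2_anti[OF sx] V20 by simp
  have "v0\<^sup>2 \<le> (V1 (s * x))\<^sup>2" using a v0_pos by (intro power_mono) auto
  hence "r0 \<le> RR x" unfolding r0_def RR_def by (rule mult_left_mono) (use Lam_pos in auto)
  moreover have "(V2 (s * x))\<^sup>2 \<le> v0\<^sup>2" using b pos2 by (intro power_mono) (auto simp: less_imp_le)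
  hence "PP x \<le> r0" unfolding r0_def PP_def by (rule mult_left_mono) (use Lam_pos in auto)
  moreover have "mm \<le> G1 x" unfolding mm_def G1_def using d1_mono[OF sx] .
  moreover have "G1 x \<le> 1" unfolding G1_def by (rule d1_le1)
  ultimately show "r0 \<le> RR x \<and> PP x \<le> r0 \<and> mm \<le> G1 x \<and> G1 x \<le> 1" by simp
next
  fix x assume x: "x \<in> {-L..0}"
  have sx: "s * x \<le> 0" using x s_pos by (simp add: mult_nonneg_nonpos)
  have a: "V2 (s * x) \<ge> v0" using V2_anti[OF sx] V20 by simp
  have b: "V1 (s * x) \<le> v0" unfolding v0_def using V1_mono[OF sx] .
  have "v0\<^sup>2 \<le> (V2 (s * x))\<^sup>2" using a v0_pos by (intro power_mono) auto
  hence "r0 \<le> PP x" unfolding r0_def PP_def by (rule mult_left_mono) (use Lam_pos in auto)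
  moreover have "(V1 (s * x))\<^sup>2 \<le> v0\<^sup>2" using b pos1 by (intro power_mono) (auto simp: less_imp_le)
  hence "RR x \<le> r0" unfolding r0_def RR_def by (rule mult_left_mono) (use Lam_pos in auto)
  moreover have "mm \<le> G2 x" unfolding mm_def G2_def d2_eq using d1_mono[of 0 "- (s * x)"] sx by simp
  moreover have "G2 x \<le> 1" unfolding G2_def d2_eq using d1_le1 by simp
  ultimately show "r0 \<le> PP x \<and> RR x \<le> r0 \<and> mm \<le> G2 x \<and> G2 x \<le> 1" by simp
next
  show "mm > 0" by (rule mm_pos)
  show "r0 > 0" unfolding r0_def using v0_pos Lam_pos by simp
  thus "r0 \<ge> 0" by simp
qed

end


lemma interp:
  fixes phi phi' phi'' :: "real \<Rightarrow> real"
  assumes d1: "\<forall>t\<in>{a<..<b}. (phi has_real_derivative phi' t) (at t)"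
    and d2: "\<forall>t\<in>{a<..<b}. (phi' has_real_derivative phi'' t) (at t)"
    and b0: "\<forall>t\<in>{a<..<b}. \<bar>phi t\<bar> \<le> M0" and b2: "\<forall>t\<in>{a<..<b}. \<bar>phi'' t\<bar> \<le> M2"
    and h: "h > 0" "b - a > 2 * h" and z: "z \<in> {a<..<b}"
  shows "\<bar>phi' z\<bar> \<le> 2 * M0 / h + h * M2"
proof -
  have key: "\<bar>phi' z\<bar> \<le> 2 * M0 / h + h * M2"
    if lr: "lo < hi" "hi - lo = h" "lo \<in> {a<..<b}" "hi \<in> {a<..<b}" "z = lo \<or> z = hi" for lo hi
  proof -
    have sub: "{lo..hi} \<subseteq> {a<..<b}" using lr by auto
    obtain xi where xi: "lo < xi" "xi < hi" "phi hi - phi lo = (hi - lo) * phi' xi"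
      using MVT2[of lo hi phi phi'] lr(1) d1 sub by (meson atLeastAtMost_iff subsetD)
    have "\<bar>phi hi - phi lo\<bar> \<le> 2 * M0" using b0 lr by (smt (verit))
    hence "h * \<bar>phi' xi\<bar> \<le> 2 * M0" using xi lr by (simp add: abs_mult)
    hence p1: "\<bar>phi' xi\<bar> \<le> 2 * M0 / h" using h by (simp add: field_simps)
    have p2: "\<bar>phi' z - phi' xi\<bar> \<le> h * M2"
    proof (cases "z = xi")
      case True thus ?thesis using b2 lr h by (smt (verit) mult_nonneg_nonneg)
    next
      case False
      define y1 where "y1 = min z xi"
      define y2 where "y2 = max z xi"
      have y12: "y1 < y2" using False unfolding y1_def y2_def by auto
      have ysub: "{y1..y2} \<subseteq> {lo..hi}" using lr xi unfolding y1_def y2_def by auto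
      obtain eta where eta: "y1 < eta" "eta < y2" "phi' y2 - phi' y1 = (y2 - y1) * phi'' eta"
        using MVT2[of y1 y2 phi' phi''] y12 d2 ysub sub by (meson atLeastAtMost_iff subsetD)
      have "eta \<in> {lo..hi}" using eta ysub y12 by auto
      hence "eta \<in> {a<..<b}" using sub by blast
      hence "\<bar>phi'' eta\<bar> \<le> M2" using b2 by blast
      moreover have "y2 - y1 \<le> h" "y2 - y1 \<ge> 0" using ysub lr y12 by auto
      ultimately have "(y2 - y1) * \<bar>phi'' eta\<bar> \<le> h * M2"
        by (intro mult_mono) auto
      hence "\<bar>phi' y2 - phi' y1\<bar> \<le> h * M2" using eta y12 by (simp add: abs_mult)
      moreover have "\<bar>phi' z - phi' xi\<bar> = \<bar>phi' y2 - phi' y1\<bar>" unfolding y1_def y2_def by (cases "z \<le> xi") auto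
      ultimately show ?thesis by simp
    qed
    show ?thesis using p1 p2 by linarith
  qed
  show ?thesis
  proof (cases "z + h < b")
    case True thus ?thesis using key[of z "z + h"] z h by auto
  next
    case False
    hence "z - h > a" using h by linarith
    thus ?thesis using key[of "z - h" z] z h by auto
  qed
qed

lemma supn_fin:
  assumes ne: "z0 \<in> I" and bd: "\<forall>z\<in>I. \<bar>h z\<bar> \<le> M"
  shows "\<exists>r. supn I h = ereal r \<and> r \<ge> 0 \<and> (\<forall>z\<in>I. \<bar>h z\<bar> \<le> r)"
proof -
  define S where "S = supn I h"
  have up: "ereal \<bar>h z\<bar> \<le> S" if "z \<in> I" for z unfolding S_def supn_def using that by (rule SUP_upper)
  have lo: "S \<le> ereal M" unfolding S_def supn_def using bd by (intro SUP_least) auto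
  have "ereal 0 \<le> S" using up[OF ne] by (meson abs_ge_zero ereal_less_eq(3) order_trans)
  then obtain r where r: "S = ereal r" using lo by (cases S) auto
  show ?thesis using r up \<open>ereal 0 \<le> S\<close> unfolding S_def by auto
qed

lemma supn_le: "(\<forall>z\<in>I. \<bar>f z\<bar> \<le> c) \<Longrightarrow> supn I f \<le> ereal c"
  unfolding supn_def by (intro SUP_least) auto

context fixLam
begin

lemma bvp_iff: "bvp_sol V1 V2 Lam h1 h2 p1 p2 \<longleftrightarrow>
   (continuous_on {-L..L} p1 \<and> continuous_on {-L..L} p2 \<and>
    (\<forall>z\<in>{-L<..<L}. p1 differentiable at z \<and> deriv p1 differentiable at z \<and>
                    p2 differentiable at z \<and> deriv p2 differentiable at z) \<and>
    (\<forall>z\<in>{-L<..<L}. - deriv (deriv p1) z + PP z * p1 z + KK z * p2 z = h1 z \<and>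
                    - deriv (deriv p2) z + RR z * p2 z + KK z * p1 z = h2 z) \<and>
    p1 (-L) = 0 \<and> p1 L = 0 \<and> p2 (-L) = 0 \<and> p2 L = 0)"
  unfolding bvp_sol_def Let_def L_def[symmetric] s_def[symmetric] PP_def RR_def KK_def by simp

lemma coop:
  assumes "bvp_sol V1 V2 Lam h1 h2 p1 p2"
  shows "odesol (-L) L PP KK RR h1 (\<lambda>z. - h2 z) p1 (\<lambda>z. - p2 z) (deriv p1) (\<lambda>z. - deriv p2 z)"
proof -
  have B: "continuous_on {-L..L} p1" "continuous_on {-L..L} p2"
    "\<forall>z\<in>{-L<..<L}. p1 differentiable at z \<and> deriv p1 differentiable at z \<and>
                    p2 differentiable at z \<and> deriv p2 differentiable at z"
    "\<forall>z\<in>{-L<..<L}. - deriv (deriv p1) z + PP z * p1 z + KK z * p2 z = h1 z \<and>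
                    - deriv (deriv p2) z + RR z * p2 z + KK z * p1 z = h2 z"
    using assms unfolding bvp_iff by auto
  show ?thesis unfolding odesol_def
  proof (intro conjI ballI)
    show "continuous_on {-L..L} p1" by (rule B(1))
    show "continuous_on {-L..L} (\<lambda>z. - p2 z)" using B(2) by (intro continuous_intros)
    fix z assume z: "z \<in> {-L<..<L}"
    have D: "(p1 has_real_derivative deriv p1 z) (at z)" "(deriv p1 has_real_derivative deriv (deriv p1) z) (at z)"
      "(p2 has_real_derivative deriv p2 z) (at z)" "(deriv p2 has_real_derivative deriv (deriv p2) z) (at z)"
      using B(3) z by (auto simp: DERIV_deriv_iff_real_differentiable)
    have E0: "- deriv (deriv p1) z + PP z * p1 z + KK z * p2 z = h1 z"
      "- deriv (deriv p2) z + RR z * p2 z + KK z * p1 z = h2 z" using B(4) z by blast+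
    have E: "deriv (deriv p1) z = PP z * p1 z + KK z * p2 z - h1 z"
      "deriv (deriv p2) z = RR z * p2 z + KK z * p1 z - h2 z" using E0 by linarith+
    show "(p1 has_real_derivative deriv p1 z) (at z)" by (rule D(1))
    show "((\<lambda>z. - p2 z) has_real_derivative - deriv p2 z) (at z)" using DERIV_minus[OF D(3)] .
    show "(deriv p1 has_real_derivative PP z * p1 z - KK z * - p2 z - h1 z) (at z)"
      using D(2) E(1) by simp
    show "((\<lambda>z. - deriv p2 z) has_real_derivative RR z * - p2 z - KK z * p1 z - - h2 z) (at z)"
      using DERIV_minus[OF D(4)] E(2) by (simp add: algebra_simps)
  qed
qed

lemma bcs: "bvp_sol V1 V2 Lam h1 h2 p1 p2 \<Longrightarrow> p1 (-L) = 0 \<and> p1 L = 0 \<and> p2 (-L) = 0 \<and> p2 L = 0"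
  unfolding bvp_iff by auto

lemma exist:
  assumes c1: "continuous_on {-L..L} h1" and c2: "continuous_on {-L..L} h2"
  shows "\<exists>p1 p2. bvp_sol V1 V2 Lam h1 h2 p1 p2"
proof -
  interpret E: esys L PP KK RR G1 G2 G1' G2' mm 1 r0 r0 Am by (rule esys_inst)
  have c2': "continuous_on {-L..L} (\<lambda>z. - h2 z)" using c2 by (intro continuous_intros)
  obtain u1 u2 v1 v2 where U: "odesol (-L) L PP KK RR h1 (\<lambda>z. - h2 z) u1 u2 v1 v2"
    "u1 (-L) = 0" "u1 L = 0" "u2 (-L) = 0" "u2 L = 0"
    using E.bvp_exist[OF c1 c2'] by blast
  have cu: "continuous_on {-L..L} u1" "continuous_on {-L..L} u2" using U(1) unfolding odesol_def by auto
  have D: "\<forall>y\<in>{-L<..<L}. (u1 has_real_derivative v1 y) (at y) \<and> (u2 has_real_derivative v2 y) (at y) \<and>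
        (v1 has_real_derivative (PP y * u1 y - KK y * u2 y - h1 y)) (at y) \<and>
        (v2 has_real_derivative (RR y * u2 y - KK y * u1 y - - h2 y)) (at y)"
    using U(1) unfolding odesol_def by blast
  show ?thesis
  proof (rule exI[of _ u1], rule exI[of _ "\<lambda>z. - u2 z"], unfold bvp_iff, intro conjI ballI)
    show "continuous_on {-L..L} u1" by (rule cu(1))
    show "continuous_on {-L..L} (\<lambda>z. - u2 z)" using cu(2) by (intro continuous_intros)
    show "u1 (-L) = 0" "u1 L = 0" "- u2 (-L) = 0" "- u2 L = 0" using U by auto
    fix z assume z: "z \<in> {-L<..<L}"
    have o: "open {-L<..<L}" by simp
    have A1: "u1 differentiable at z \<and> deriv u1 z = v1 z \<and> deriv u1 differentiable at z \<and>
        deriv (deriv u1) z = PP z * u1 z - KK z * u2 z - h1 z"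
      by (rule deriv2_open[OF o z]) (use D z in auto)
    have dm: "\<forall>y\<in>{-L<..<L}. ((\<lambda>z. - u2 z) has_real_derivative - v2 y) (at y)"
      using D by (auto intro: DERIV_minus)
    have A2: "(\<lambda>z. - u2 z) differentiable at z \<and> deriv (\<lambda>z. - u2 z) z = - v2 z \<and>
        deriv (\<lambda>z. - u2 z) differentiable at z \<and>
        deriv (deriv (\<lambda>z. - u2 z)) z = - (RR z * u2 z - KK z * u1 z - - h2 z)"
    proof -
      have "(v2 has_real_derivative (RR z * u2 z - KK z * u1 z - - h2 z)) (at z)" using D z by blast
      hence "((\<lambda>y. - v2 y) has_real_derivative - (RR z * u2 z - KK z * u1 z - - h2 z)) (at z)"
        by (rule DERIV_minus)
      thus ?thesis by (rule deriv2_open[OF o z dm])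
    qed
    show "u1 differentiable at z" "deriv u1 differentiable at z"
      "(\<lambda>z. - u2 z) differentiable at z" "deriv (\<lambda>z. - u2 z) differentiable at z"
      using A1 A2 by auto
    show "- deriv (deriv u1) z + PP z * u1 z + KK z * - u2 z = h1 z" using A1 by simp
    show "- deriv (deriv (\<lambda>z. - u2 z)) z + RR z * - u2 z + KK z * u1 z = h2 z" using A2 by simp
  qed
qed

lemma uniq:
  assumes "bvp_sol V1 V2 Lam h1 h2 p1 p2" "bvp_sol V1 V2 Lam h1 h2 q1 q2" "z \<in> {-L..L}"
  shows "p1 z = q1 z \<and> p2 z = q2 z"
proof -
  interpret E: esys L PP KK RR G1 G2 G1' G2' mm 1 r0 r0 Am by (rule esys_inst)
  have C: "odesol (-L) L PP KK RR (\<lambda>x. 1 * h1 x + - 1 * h1 x) (\<lambda>x. 1 * - h2 x + - 1 * - h2 x)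
       (\<lambda>x. 1 * p1 x + - 1 * q1 x) (\<lambda>x. 1 * - p2 x + - 1 * - q2 x)
       (\<lambda>x. 1 * deriv p1 x + - 1 * deriv q1 x) (\<lambda>x. 1 * - deriv p2 x + - 1 * - deriv q2 x)"
    by (rule odesol_comb[OF coop[OF assms(1)] coop[OF assms(2)]])
  have f0: "(\<lambda>x. 1 * h1 x + - 1 * h1 x) = (\<lambda>x. 0)" "(\<lambda>x. 1 * - h2 x + - 1 * - h2 x) = (\<lambda>x. 0)"
    by auto
  have C0: "odesol (-L) L PP KK RR (\<lambda>x. 0) (\<lambda>x. 0)
       (\<lambda>x. 1 * p1 x + - 1 * q1 x) (\<lambda>x. 1 * - p2 x + - 1 * - q2 x)
       (\<lambda>x. 1 * deriv p1 x + - 1 * deriv q1 x) (\<lambda>x. 1 * - deriv p2 x + - 1 * - deriv q2 x)"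
    using C unfolding f0 .
  have "1 * p1 z + - 1 * q1 z = 0 \<and> 1 * - p2 z + - 1 * - q2 z = 0"
    by (rule E.uniq0[OF C0 _ _ _ _ assms(3)]) (use bcs[OF assms(1)] bcs[OF assms(2)] in auto)
  thus ?thesis by simp
qed

end


context fixLam
begin

definition "sg = 120 * T\<^sup>2 / mm\<^sup>2 + 2 / v0\<^sup>2"
definition "Pq = 4 * sg\<^sup>2 * T + 4 * sg * T + 8 * (v0 + T)\<^sup>2 * sg\<^sup>2 * T"
definition "A0 = 1 + Pq"
definition "A2 = 4 * (v0 + T)\<^sup>2 * A0 + 1"
definition "Th = 6 * A0 + 2 * A2"

lemma Pq_nn: "Pq \<ge> 0"
proof -
  have "sg \<ge> 0" unfolding sg_def by simp
  thus ?thesis unfolding Pq_def using T2 by simp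
qed

lemma Am_eq: "Am = 2 * (s * s) * (v0 + T)\<^sup>2" unfolding Am_def ss ..
lemma r0_eq: "r0 = (s * s) * v0\<^sup>2" unfolding r0_def ss ..

lemma estimate:
  assumes ch1: "continuous_on {-L..L} h1" and ch2: "continuous_on {-L..L} h2"
    and sol: "bvp_sol V1 V2 Lam h1 h2 p1 p2" and Tha: "Th \<le> Lam powr a"
  shows "ereal (Lam powr (-1/4)) * supn {-halfwidth Lam<..<halfwidth Lam} (deriv p1)
           + supn {-halfwidth Lam<..<halfwidth Lam} p1
           + ereal (Lam powr (-1/4)) * supn {-halfwidth Lam<..<halfwidth Lam} (deriv p2)
           + supn {-halfwidth Lam<..<halfwidth Lam} p2
         \<le> ereal (1 * Lam powr (-1/2 + a)) *
             (supn {-halfwidth Lam<..<halfwidth Lam} h1 + supn {-halfwidth Lam<..<halfwidth Lam} h2)"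
proof -
  interpret E: esys L PP KK RR G1 G2 G1' G2' mm 1 r0 r0 Am by (rule esys_inst)
  define I where "I = {-L<..<L}"
  have Ieq: "{-halfwidth Lam<..<halfwidth Lam} = I" unfolding I_def L_def ..
  have z0: "0 \<in> I" using L_pos unfolding I_def by simp
  have IL: "\<And>z. z \<in> I \<Longrightarrow> z \<in> {-L..L}" unfolding I_def by auto
  obtain M1 where M1: "\<forall>z\<in>{-L..L}. norm (h1 z) \<le> M1" using cont_bounded_interval[OF ch1] by blast
  obtain M2 where M2: "\<forall>z\<in>{-L..L}. norm (h2 z) \<le> M2" using cont_bounded_interval[OF ch2] by blast
  obtain r1 where r1: "supn I h1 = ereal r1" "r1 \<ge> 0" "\<forall>z\<in>I. \<bar>h1 z\<bar> \<le> r1"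
    using supn_fin[OF z0, of h1 M1] M1 IL by auto
  obtain r2 where r2: "supn I h2 = ereal r2" "r2 \<ge> 0" "\<forall>z\<in>I. \<bar>h2 z\<bar> \<le> r2"
    using supn_fin[OF z0, of h2 M2] M2 IL by auto
  define F where "F = r1 + r2"
  have F0: "F \<ge> 0" unfolding F_def using r1 r2 by simp
  have fb: "\<And>z. z \<in> {-L<..<L} \<Longrightarrow> \<bar>h1 z\<bar> \<le> F \<and> \<bar>- h2 z\<bar> \<le> F"
    using r1 r2 unfolding F_def I_def by force
  have ch2': "continuous_on {-L..L} (\<lambda>z. - h2 z)" using ch2 by (intro continuous_intros)
  have BC: "p1 (-L) = 0" "p1 L = 0" "- p2 (-L) = 0" "- p2 L = 0" using bcs[OF sol] by auto
  interpret S: esol L PP KK RR G1 G2 G1' G2' mm 1 r0 r0 Am h1 "\<lambda>z. - h2 z" p1 "\<lambda>z. - p2 z"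
      "deriv p1" "\<lambda>z. - deriv p2 z" F
    by unfold_locales (use coop[OF sol] BC ch1 ch2' fb in auto)
  have sp: "s > 0" by (rule s_pos)
  have cS_eq: "E.cS = sg / (s * s)"
    unfolding E.cS_def E.c1_def unfolding sg_def r0_eq L_eq using sp mm_pos v0_pos
    by (simp add: field_simps power2_eq_square)
  have B_eq: "s * (E.cS * (4 * E.cS * L * F\<^sup>2)) + (4 * E.cS * L * F\<^sup>2 + Am * (E.cS * (4 * E.cS * L * F\<^sup>2))) / s
      = Pq * F\<^sup>2 / (s * s * s * s)"
    unfolding cS_eq Am_eq unfolding L_eq Pq_def using sp by (simp add: field_simps power2_eq_square)
  have pb: "\<bar>p1 z\<bar> \<le> A0 * F / (s * s) \<and> \<bar>p2 z\<bar> \<le> A0 * F / (s * s)" if z: "z \<in> {-L..L}" for z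
  proof -
    have e: "(p1 z)\<^sup>2 \<le> Pq * F\<^sup>2 / (s * s * s * s) \<and> (p2 z)\<^sup>2 \<le> Pq * F\<^sup>2 / (s * s * s * s)"
      using S.energy_main[OF sp z] unfolding B_eq by simp
    have "Pq \<le> A0\<^sup>2" unfolding A0_def using Pq_nn by (simp add: power2_eq_square algebra_simps)
    hence "Pq * F\<^sup>2 / (s * s * s * s) \<le> A0\<^sup>2 * F\<^sup>2 / (s * s * s * s)"
      using sp by (intro divide_right_mono mult_right_mono) auto
    also have "\<dots> = (A0 * F / (s * s))\<^sup>2" by (simp add: power2_eq_square mult_ac)
    finally have q: "Pq * F\<^sup>2 / (s * s * s * s) \<le> (A0 * F / (s * s))\<^sup>2" .
    have nn: "A0 * F / (s * s) \<ge> 0" unfolding A0_def using Pq_nn F0 sp by simp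
    show ?thesis using e q nn power2_le_iff_abs_le[OF nn] by (meson order_trans)
  qed
  have B: "\<forall>z\<in>{-L<..<L}. p1 differentiable at z \<and> deriv p1 differentiable at z \<and>
                    p2 differentiable at z \<and> deriv p2 differentiable at z"
    "\<forall>z\<in>{-L<..<L}. - deriv (deriv p1) z + PP z * p1 z + KK z * p2 z = h1 z \<and>
                    - deriv (deriv p2) z + RR z * p2 z + KK z * p1 z = h2 z"
    using sol unfolding bvp_iff by auto
  have sec: "\<bar>deriv (deriv p1) z\<bar> \<le> A2 * F \<and> \<bar>deriv (deriv p2) z\<bar> \<le> A2 * F" if z: "z \<in> {-L<..<L}" for z
  proof -
    have zz: "z \<in> {-L..L}" using z by auto
    have c: "0 \<le> PP z" "0 \<le> RR z" "0 \<le> KK z" "PP z \<le> Am" "RR z \<le> Am" "KK z \<le> Am" using E.coef[OF zz] by auto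
    have p: "\<bar>p1 z\<bar> \<le> A0 * F / (s * s)" "\<bar>p2 z\<bar> \<le> A0 * F / (s * s)" using pb[OF zz] by auto
    have h: "\<bar>h1 z\<bar> \<le> F" "\<bar>h2 z\<bar> \<le> F" using fb[OF z] by auto
    have e: "deriv (deriv p1) z = PP z * p1 z + KK z * p2 z - h1 z"
      "deriv (deriv p2) z = RR z * p2 z + KK z * p1 z - h2 z" using B(2) z by (smt (verit))+
    have m1: "\<bar>PP z * p1 z\<bar> \<le> Am * (A0 * F / (s * s))" "\<bar>KK z * p2 z\<bar> \<le> Am * (A0 * F / (s * s))"
      "\<bar>RR z * p2 z\<bar> \<le> Am * (A0 * F / (s * s))" "\<bar>KK z * p1 z\<bar> \<le> Am * (A0 * F / (s * s))"
    proof -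
      have mm': "\<bar>c * p\<bar> \<le> Am * (A0 * F / (s * s))" if "0 \<le> c" "c \<le> Am" "\<bar>p\<bar> \<le> A0 * F / (s * s)" for c p
      proof -
        have "\<bar>c * p\<bar> = c * \<bar>p\<bar>" using that(1) by (simp add: abs_mult)
        also have "\<dots> \<le> Am * (A0 * F / (s * s))" by (rule mult_mono) (use that in auto)
        finally show ?thesis .
      qed
      show "\<bar>PP z * p1 z\<bar> \<le> Am * (A0 * F / (s * s))" "\<bar>KK z * p2 z\<bar> \<le> Am * (A0 * F / (s * s))"
        "\<bar>RR z * p2 z\<bar> \<le> Am * (A0 * F / (s * s))" "\<bar>KK z * p1 z\<bar> \<le> Am * (A0 * F / (s * s))"
        using mm' c p by auto
    qed
    have "Am * (A0 * F / (s * s)) = 2 * (v0 + T)\<^sup>2 * A0 * F" unfolding Am_eq using sp by (simp add: field_simps)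
    hence "2 * (Am * (A0 * F / (s * s))) + F = A2 * F" unfolding A2_def by (simp add: algebra_simps)
    thus ?thesis using e m1 h by (smt (verit))
  qed
  have db: "\<bar>deriv p1 z\<bar> \<le> (2 * A0 + A2) * F / s \<and> \<bar>deriv p2 z\<bar> \<le> (2 * A0 + A2) * F / s"
    if z: "z \<in> {-L<..<L}" for z
  proof -
    have hh: "1 / s > 0" "L - - L > 2 * (1 / s)" using sp T2 L_eq by (auto simp: field_simps)
    have D: "\<forall>t\<in>{-L<..<L}. (p1 has_real_derivative deriv p1 t) (at t) \<and> (deriv p1 has_real_derivative deriv (deriv p1) t) (at t)
       \<and> (p2 has_real_derivative deriv p2 t) (at t) \<and> (deriv p2 has_real_derivative deriv (deriv p2) t) (at t)"
      using B(1) by (auto simp: DERIV_deriv_iff_real_differentiable)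
    have pbo: "\<forall>t\<in>{-L<..<L}. \<bar>p1 t\<bar> \<le> A0 * F / (s * s)" "\<forall>t\<in>{-L<..<L}. \<bar>p2 t\<bar> \<le> A0 * F / (s * s)"
      using pb by auto
    have "\<bar>deriv p1 z\<bar> \<le> 2 * (A0 * F / (s * s)) / (1 / s) + 1 / s * (A2 * F)"
      by (rule interp[OF _ _ pbo(1) _ hh z]) (use D sec in auto)
    moreover have "\<bar>deriv p2 z\<bar> \<le> 2 * (A0 * F / (s * s)) / (1 / s) + 1 / s * (A2 * F)"
      by (rule interp[OF _ _ pbo(2) _ hh z]) (use D sec in auto)
    moreover have "2 * (A0 * F / (s * s)) / (1 / s) + 1 / s * (A2 * F) = (2 * A0 + A2) * F / s"
      using sp by (simp add: field_simps)
    ultimately show ?thesis by simp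
  qed
  have s1: "supn I (deriv p1) \<le> ereal ((2 * A0 + A2) * F / s)" "supn I (deriv p2) \<le> ereal ((2 * A0 + A2) * F / s)"
    using db unfolding I_def by (auto intro!: supn_le)
  have s2: "supn I p1 \<le> ereal (A0 * F / (s * s))" "supn I p2 \<le> ereal (A0 * F / (s * s))"
    using pb unfolding I_def by (auto intro!: supn_le)
  have inv: "Lam powr (-1/4) = 1 / s" by (rule sinv)
  have m: "ereal (1 / s) * supn I (deriv p1) \<le> ereal ((2 * A0 + A2) * F / (s * s))"
          "ereal (1 / s) * supn I (deriv p2) \<le> ereal ((2 * A0 + A2) * F / (s * s))"
  proof -
    have "ereal (1 / s) * ereal ((2 * A0 + A2) * F / s) = ereal ((2 * A0 + A2) * F / (s * s))" by simp
    moreover have "ereal (1 / s) \<ge> 0" using sp by simp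
    ultimately show "ereal (1 / s) * supn I (deriv p1) \<le> ereal ((2 * A0 + A2) * F / (s * s))"
          "ereal (1 / s) * supn I (deriv p2) \<le> ereal ((2 * A0 + A2) * F / (s * s))"
      using s1 ereal_mult_left_mono by metis+
  qed
  have lhs: "ereal (1 / s) * supn I (deriv p1) + supn I p1 + ereal (1 / s) * supn I (deriv p2) + supn I p2
       \<le> ereal (Th * F / (s * s))"
  proof -
    have "ereal (1 / s) * supn I (deriv p1) + supn I p1 + ereal (1 / s) * supn I (deriv p2) + supn I p2
       \<le> ereal ((2 * A0 + A2) * F / (s * s)) + ereal (A0 * F / (s * s)) + ereal ((2 * A0 + A2) * F / (s * s))
          + ereal (A0 * F / (s * s))"
      using m s2 by (intro add_mono) auto
    also have "\<dots> = ereal (Th * F / (s * s))" unfolding Th_def using sp by (simp add: field_simps)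
    finally show ?thesis .
  qed
  have pw: "Lam powr (-1/2 + a) = Lam powr a / (s * s)"
  proof -
    have "Lam powr (-1/2 + a) = Lam powr a * Lam powr (-1/2)" by (simp only: powr_add[symmetric] add.commute)
    moreover have "Lam powr (-1/2) = 1 / (s * s)" unfolding ss using Lam_pos
      by (simp add: powr_minus_divide powr_half_sqrt)
    ultimately show ?thesis by simp
  qed
  have "Th * F / (s * s) \<le> Lam powr a * F / (s * s)"
    using Tha F0 sp by (intro divide_right_mono mult_right_mono) auto
  hence fin: "ereal (Th * F / (s * s)) \<le> ereal (1 * Lam powr (-1/2 + a)) * (ereal r1 + ereal r2)"
    unfolding pw F_def by (simp add: field_simps)
  show ?thesis unfolding Ieq inv r1(1) r2(1) by (rule order_trans[OF lhs fin])
qed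

end


definition Theta :: "real \<Rightarrow> real \<Rightarrow> real \<Rightarrow> real" where
  "Theta v m x = (let T = ln x; sg = 120 * T\<^sup>2 / m\<^sup>2 + 2 / v\<^sup>2;
      Pq = 4 * sg\<^sup>2 * T + 4 * sg * T + 8 * (v + T)\<^sup>2 * sg\<^sup>2 * T; A0 = 1 + Pq;
      A2 = 4 * (v + T)\<^sup>2 * A0 + 1 in 6 * A0 + 2 * A2)"

lemma Theta_lim:
  fixes v m a :: real
  assumes "v > 0" "m > 0" "a > 0"
  shows "((\<lambda>x. Theta v m x / x powr a) \<longlongrightarrow> 0) at_top"
  using assms unfolding Theta_def Let_def by real_asymp

lemma (in fixLam) Th_Theta: "Th = Theta v0 mm Lam"
  unfolding Th_def A2_def A0_def Pq_def sg_def Theta_def Let_def T_def by simp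

theorem corollary4p1:
  fixes V1 V2 :: "real \<Rightarrow> real" and \<alpha> :: real
  assumes "is_V_pair V1 V2" and "\<alpha> > 0"
  shows "\<exists>Lam0 C. Lam0 > 0 \<and> C > 0 \<and>
    (\<forall>Lam \<ge> Lam0. \<forall>h1 h2.
       continuous_on {-halfwidth Lam..halfwidth Lam} h1 \<and>
       continuous_on {-halfwidth Lam..halfwidth Lam} h2 \<longrightarrow>
         (\<exists>p1 p2. bvp_sol V1 V2 Lam h1 h2 p1 p2) \<and>
         (\<forall>p1 p2 q1 q2. bvp_sol V1 V2 Lam h1 h2 p1 p2 \<and> bvp_sol V1 V2 Lam h1 h2 q1 q2 \<longrightarrow>
            (\<forall>z\<in>{-halfwidth Lam..halfwidth Lam}. p1 z = q1 z \<and> p2 z = q2 z)) \<and>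
         (\<forall>p1 p2. bvp_sol V1 V2 Lam h1 h2 p1 p2 \<longrightarrow>
            (let I = {-halfwidth Lam<..<halfwidth Lam} in
              ereal (Lam powr (-1/4)) * supn I (deriv p1) + supn I p1
              + ereal (Lam powr (-1/4)) * supn I (deriv p2) + supn I p2
              \<le> ereal (C * Lam powr (-1/2 + \<alpha>)) * (supn I h1 + supn I h2))))"
proof -
  interpret vpair V1 V2 by unfold_locales (rule assms(1))
  have lim: "((\<lambda>x. Theta (V1 0) (deriv V1 0) x / x powr \<alpha>) \<longlongrightarrow> 0) at_top"
    using Theta_lim[OF pos1 d1_pos assms(2)] .
  have "eventually (\<lambda>x. Theta (V1 0) (deriv V1 0) x / x powr \<alpha> < 1) at_top"
    using order_tendstoD(2)[OF lim] by simp
  then obtain N where N: "\<And>x. x \<ge> N \<Longrightarrow> Theta (V1 0) (deriv V1 0) x / x powr \<alpha> < 1"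
    by (auto simp: eventually_at_top_linorder)
  define Lam0 where "Lam0 = max N (exp 2)"
  have L0: "Lam0 > 0" unfolding Lam0_def by (simp add: less_max_iff_disj)
  show ?thesis
  proof (rule exI[of _ Lam0], rule exI[of _ "1::real"], intro conjI)
    show "Lam0 > 0" by (rule L0)
    show "(1::real) > 0" by simp
  next
    show "\<forall>Lam \<ge> Lam0. \<forall>(h1::real\<Rightarrow>real) (h2::real\<Rightarrow>real).
       continuous_on {-halfwidth Lam..halfwidth Lam} h1 \<and>
       continuous_on {-halfwidth Lam..halfwidth Lam} h2 \<longrightarrow>
         (\<exists>p1 p2. bvp_sol V1 V2 Lam h1 h2 p1 p2) \<and>
         (\<forall>p1 p2 q1 q2. bvp_sol V1 V2 Lam h1 h2 p1 p2 \<and> bvp_sol V1 V2 Lam h1 h2 q1 q2 \<longrightarrow>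
            (\<forall>z\<in>{-halfwidth Lam..halfwidth Lam}. p1 z = q1 z \<and> p2 z = q2 z)) \<and>
         (\<forall>p1 p2. bvp_sol V1 V2 Lam h1 h2 p1 p2 \<longrightarrow>
            (let I = {-halfwidth Lam<..<halfwidth Lam} in
              ereal (Lam powr (-1/4)) * supn I (deriv p1) + supn I p1
              + ereal (Lam powr (-1/4)) * supn I (deriv p2) + supn I p2
              \<le> ereal (1 * Lam powr (-1/2 + \<alpha>)) * (supn I h1 + supn I h2)))"
  proof (rule allI, rule impI, rule allI, rule allI, rule impI, intro conjI)
    fix Lam :: real and h1 h2 :: "real \<Rightarrow> real"
    assume Lam: "Lam \<ge> Lam0"
      and hc: "continuous_on {-halfwidth Lam..halfwidth Lam} h1 \<and> continuous_on {-halfwidth Lam..halfwidth Lam} h2"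
    have Le: "Lam \<ge> exp 2" "Lam \<ge> N" using Lam unfolding Lam0_def by auto
    interpret F: fixLam V1 V2 Lam by unfold_locales (use assms(1) Le in auto)
    have Lh: "halfwidth Lam = F.L" by (simp add: F.L_def)
    have hc': "continuous_on {-F.L..F.L} h1" "continuous_on {-F.L..F.L} h2" using hc unfolding Lh by auto
    have pw: "Lam powr \<alpha> > 0" using F.Lam_pos by simp
    have "Theta (V1 0) (deriv V1 0) Lam / Lam powr \<alpha> < 1" using N Le(2) by blast
    hence "Theta (V1 0) (deriv V1 0) Lam < Lam powr \<alpha>" using pw by (simp add: divide_less_eq)
    hence Tha: "F.Th \<le> Lam powr \<alpha>" unfolding F.Th_Theta F.v0_def F.mm_def by simp
    show "\<exists>p1 p2. bvp_sol V1 V2 Lam h1 h2 p1 p2" by (rule F.exist[OF hc'])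
    show "\<forall>p1 p2 q1 q2. bvp_sol V1 V2 Lam h1 h2 p1 p2 \<and> bvp_sol V1 V2 Lam h1 h2 q1 q2 \<longrightarrow>
            (\<forall>z\<in>{-halfwidth Lam..halfwidth Lam}. p1 z = q1 z \<and> p2 z = q2 z)"
      unfolding Lh using F.uniq by blast
    show "\<forall>p1 p2. bvp_sol V1 V2 Lam h1 h2 p1 p2 \<longrightarrow>
            (let I = {-halfwidth Lam<..<halfwidth Lam} in
              ereal (Lam powr (-1/4)) * supn I (deriv p1) + supn I p1
              + ereal (Lam powr (-1/4)) * supn I (deriv p2) + supn I p2
              \<le> ereal (1 * Lam powr (-1/2 + \<alpha>)) * (supn I h1 + supn I h2))"
      unfolding Let_def using F.estimate[OF hc' _ Tha] by blast
  qed
  qed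
qed


end
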